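(* For estimating $H_S(\underline\theta)$ under squared error loss: (a) the estimators $\delta_c$ with $c\in(-\infty,c_1(\alpha))\cup(\psi(2\alpha)-\ln2,\infty)$ are inadmissible. For $c<c_1(\alpha)$, $\delta_c$ is dominated by $\delta_{c_1(\alpha)}(X_1,X_2)=\ln Z_2-\psi(\alpha)$; for $c\in(\psi(2\alpha)-\ln2,\,c_2(\alpha))$, $\delta_c$ is dominated by the shrinkage estimator $\delta^{(S)}_c$; for $c\ge c_2(\alpha)$, $\delta_c$ is dominated by $\delta^{(S)}_{c_2(\alpha)}$. (b) $\delta_{\ln\alpha}(X_1,X_2)=\ln Z_2-\ln\alpha$ is inadmissible and is dominated by $\delta^{(S)}_{\ln\alpha}$. (c) $\delta_{\ln(\alpha+1)}(X_1,X_2)=\ln Z_2-\ln(\alpha+1)$ is inadmissible and is dominated by $\delta^{(S)}_{\ln(\alpha+1)}$. Here, for $c\in\mathbb R$, $$\delta^{(S)}_c(X_1,X_2)=\begin{cases}\ln Z_2-c, & \text{if } Z_1/Z_2<e^{\psi(2\alpha)-c}-1,\\ \ln(X_1+X_2)-\psi(2\alpha), & \text{if } Z_1/Z_2\ge e^{\psi(2\alpha)-c}-1.\end{cases}$$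
   Context: Fix a known $\alpha>0$. $X_1,X_2$ are independent, $X_i$ having density $f(x\mid\theta_i)=\frac{x^{\alpha-1}e^{-x/\theta_i}}{\Gamma(\alpha)\theta_i^{\alpha}}$, $x>0$, with unknown $\underline\theta=(\theta_1,\theta_2)\in\Theta=(0,\infty)^2$. $Z_1=\min\{X_1,X_2\}$, $Z_2=\max\{X_1,X_2\}$. $H_S(\underline\theta)=\ln\theta_1\, I(X_1\ge X_2)+\ln\theta_2\, I(X_1<X_2)$. $\psi$ is the digamma function; $G_\alpha,g_\alpha$ are the distribution function and density of the gamma distribution with shape $\alpha$, scale $1$; $c_1(\alpha)=\psi(\alpha)$, $c_2(\alpha)=2\int_0^\infty\ln(z)G_\alpha(z)g_\alpha(z)\,dz$. For $c\in\mathbb R$, $\delta_c(X_1,X_2)=\ln Z_2-c$. Risk: $R(\underline\theta,\delta)=\mathbb E_{\underline\theta}(\delta(X_1,X_2)-H_S(\underline\theta))^2$; $\delta'$ dominates $\delta$ if its risk is $\le$ for all $\underline\theta$ and $<$ for some; $\delta$ is inadmissible if some estimator dominates it. *)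

theory Defs
  imports "HOL-Analysis.Analysis"
begin

definition gdens :: "real \<Rightarrow> real \<Rightarrow> real \<Rightarrow> real" where
  "gdens a th x = (if x > 0 then x powr (a - 1) * exp (- x / th) / (Gamma a * th powr a) else 0)"

definition gcdf :: "real \<Rightarrow> real \<Rightarrow> real" where
  "gcdf a z = (LBINT t=0..z. gdens a 1 t)"

definition c1 :: "real \<Rightarrow> real" where
  "c1 a = Digamma a"

definition c2 :: "real \<Rightarrow> real" where
  "c2 a = 2 * (LINT z:{0<..}|lborel. ln z * gcdf a z * gdens a 1 z)"

definition HS :: "real \<Rightarrow> real \<Rightarrow> real \<Rightarrow> real \<Rightarrow> real" where
  "HS th1 th2 x1 x2 = (if x1 \<ge> x2 then ln th1 else ln th2)"

definition risk :: "real \<Rightarrow> real \<Rightarrow> real \<Rightarrow> (real \<Rightarrow> real \<Rightarrow> real) \<Rightarrow> ennreal" where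
  "risk a th1 th2 d = (\<integral>\<^sup>+ p. ennreal ((d (fst p) (snd p) - HS th1 th2 (fst p) (snd p))\<^sup>2
        * gdens a th1 (fst p) * gdens a th2 (snd p)) \<partial>(lborel \<Otimes>\<^sub>M lborel))"

definition dominates :: "real \<Rightarrow> (real \<Rightarrow> real \<Rightarrow> real) \<Rightarrow> (real \<Rightarrow> real \<Rightarrow> real) \<Rightarrow> bool" where
  "dominates a d' d \<longleftrightarrow>
     (\<forall>th1>0. \<forall>th2>0. risk a th1 th2 d' \<le> risk a th1 th2 d) \<and>
     (\<exists>th1>0. \<exists>th2>0. risk a th1 th2 d' < risk a th1 th2 d)"

definition inadmissible :: "real \<Rightarrow> (real \<Rightarrow> real \<Rightarrow> real) \<Rightarrow> bool" where
  "inadmissible a d \<longleftrightarrow> (\<exists>d'. dominates a d' d)"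

definition delta :: "real \<Rightarrow> real \<Rightarrow> real \<Rightarrow> real" where
  "delta c x1 x2 = ln (max x1 x2) - c"

definition deltaS :: "real \<Rightarrow> real \<Rightarrow> real \<Rightarrow> real \<Rightarrow> real" where
  "deltaS a c x1 x2 =
     (if min x1 x2 / max x1 x2 < exp (Digamma (2 * a) - c) - 1
      then ln (max x1 x2) - c else ln (x1 + x2) - Digamma (2 * a))"

end

theory Submission
  imports Defs
begin

definition hk :: "real \<Rightarrow> real \<Rightarrow> real" where
  "hk b y = (if y > 0 then y powr (b - 1) * exp (- y) else 0)"

lemma hk_nonneg: "hk b y \<ge> 0" by (simp add: hk_def)

lemma hk_meas[measurable]: "hk b \<in> borel_measurable borel"
  unfolding hk_def by measurable

lemma hk_nn: assumes "b > 0" shows "(\<integral>\<^sup>+ y. ennreal (hk b y) \<partial>lborel) = ennreal (Gamma b)"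
proof -
  have "ennreal (Gamma b) = (\<integral>\<^sup>+ t. ennreal (indicator {0..} t * t powr (b - 1) / exp t) \<partial>lborel)"
    using Gamma_conv_nn_integral_real[OF assms] by simp
  also have "\<dots> = (\<integral>\<^sup>+ y. ennreal (hk b y) \<partial>lborel)"
    by (intro nn_integral_cong) (auto simp: hk_def indicator_def exp_minus field_simps)
  finally show ?thesis ..
qed

lemma hk_hasint: assumes "b > 0" shows "has_bochner_integral lborel (hk b) (Gamma b)"
  by (rule has_bochner_integral_nn_integral) (use assms hk_nn[OF assms] in \<open>auto simp: hk_nonneg\<close>)

lemma hk_int: "b > 0 \<Longrightarrow> integrable lborel (hk b)"
  using hk_hasint by (auto simp: has_bochner_integral_iff)

lemma hk_integral: "b > 0 \<Longrightarrow> integral\<^sup>L lborel (hk b) = Gamma b"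
  using hk_hasint by (auto simp: has_bochner_integral_iff)

lemma ln_sq_bound:
  fixes b y :: real assumes b: "b > 0" and y: "y > 0"
  shows "(ln y)\<^sup>2 \<le> 4 * y + 16 / b\<^sup>2 * y powr (- b / 2)"
proof (cases "y \<ge> 1")
  case True
  have "ln y = 2 * ln (sqrt y)" using y by (simp add: ln_sqrt)
  also have "\<dots> < 2 * sqrt y" using y ln_less_self[of "sqrt y"] by simp
  finally have "ln y < 2 * sqrt y" .
  moreover have "ln y \<ge> 0" using True by simp
  ultimately have "(ln y)\<^sup>2 \<le> (2 * sqrt y)\<^sup>2" by (intro power_mono) auto
  also have "\<dots> = 4 * y" using y by (simp add: power_mult_distrib)
  finally show ?thesis using y by (smt (verit) divide_nonneg_nonneg mult_nonneg_nonneg powr_ge_zero zero_le_power2)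
next
  case False
  define z where "z = y powr (- b / 4)"
  have zpos: "z > 0" using y by (simp add: z_def)
  have lnz: "ln z = - (b/4) * ln y" using y by (simp add: z_def ln_powr)
  have "ln z < z" using zpos by (rule ln_less_self)
  hence "- ln y < (4/b) * z" using b lnz by (simp add: field_simps)
  moreover have "ln y \<le> 0" using False y by simp
  ultimately have "(- ln y)\<^sup>2 \<le> ((4/b) * z)\<^sup>2"
    by (intro power_mono) auto
  hence "(ln y)\<^sup>2 \<le> ((4/b) * z)\<^sup>2" by simp
  also have "\<dots> = 16 / b\<^sup>2 * z\<^sup>2" by (simp add: power_mult_distrib power_divide)
  also have "z\<^sup>2 = y powr (- b / 2)" using y by (simp add: z_def powr_powr[symmetric] power2_eq_square powr_add[symmetric])
  finally show ?thesis using y by (smt (verit))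
qed
lemma hk_ln2_bound:
  assumes b: "b > 0"
  shows "hk b y * (ln y)\<^sup>2 \<le> 4 * hk (b + 1) y + 16 / b\<^sup>2 * hk (b / 2) y"
proof (cases "y > 0")
  case True
  have "hk b y * (ln y)\<^sup>2 \<le> hk b y * (4 * y + 16 / b\<^sup>2 * y powr (- b / 2))"
    by (intro mult_left_mono ln_sq_bound b True hk_nonneg)
  also have "\<dots> = 4 * hk (b + 1) y + 16 / b\<^sup>2 * hk (b / 2) y"
  proof -
    have e1: "y powr (b - 1 + 1) = y powr (b - 1) * y powr 1" by (rule powr_add)
    have e2: "y powr (b - 1 + - b / 2) = y powr (b - 1) * y powr (- b / 2)" by (rule powr_add)
    have e3: "b - 1 + - b / 2 = b / 2 - 1" by simp
    show ?thesis using True e1 e2 unfolding e3 by (simp add: hk_def algebra_simps)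
  qed
  finally show ?thesis .
qed (simp add: hk_def)

lemma hk_ln2_int: assumes b: "b > 0" shows "integrable lborel (\<lambda>y. hk b y * (ln y)\<^sup>2)"
proof (rule Bochner_Integration.integrable_bound)
  show "integrable lborel (\<lambda>y. 4 * hk (b + 1) y + 16 / b\<^sup>2 * hk (b / 2) y)"
    using b by (intro Bochner_Integration.integrable_add Bochner_Integration.integrable_mult_right hk_int) auto
  show "AE y in lborel. norm (hk b y * (ln y)\<^sup>2) \<le> norm (4 * hk (b + 1) y + 16 / b\<^sup>2 * hk (b / 2) y)"
  proof (intro AE_I2)
    fix y
    have n: "0 \<le> hk b y * (ln y)\<^sup>2" by (simp add: hk_nonneg)
    have le: "hk b y * (ln y)\<^sup>2 \<le> 4 * hk (b + 1) y + 16 / b\<^sup>2 * hk (b / 2) y" by (rule hk_ln2_bound[OF b])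
    have a1: "\<bar>hk b y * (ln y)\<^sup>2\<bar> = hk b y * (ln y)\<^sup>2" by (rule abs_of_nonneg[OF n])
    have a2: "\<bar>4 * hk (b + 1) y + 16 / b\<^sup>2 * hk (b / 2) y\<bar> = 4 * hk (b + 1) y + 16 / b\<^sup>2 * hk (b / 2) y"
      by (rule abs_of_nonneg) (rule order_trans[OF n le])
    show "norm (hk b y * (ln y)\<^sup>2) \<le> norm (4 * hk (b + 1) y + 16 / b\<^sup>2 * hk (b / 2) y)"
      unfolding real_norm_def a1 a2 by (rule le)
  qed
qed measurable

lemma hk_ln_int: assumes b: "b > 0" shows "integrable lborel (\<lambda>y. hk b y * ln y)"
proof (rule Bochner_Integration.integrable_bound)
  show "integrable lborel (\<lambda>y. hk b y + hk b y * (ln y)\<^sup>2)"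
    using b by (intro Bochner_Integration.integrable_add hk_ln2_int hk_int) auto
  show "AE y in lborel. norm (hk b y * ln y) \<le> norm (hk b y + hk b y * (ln y)\<^sup>2)"
  proof (intro AE_I2)
    fix y
    have h: "hk b y \<ge> 0" by (rule hk_nonneg)
    have "\<bar>ln y\<bar> \<le> 1 + (ln y)\<^sup>2"
    proof (cases "\<bar>ln y\<bar> \<le> 1")
      case False
      hence "\<bar>ln y\<bar> * 1 \<le> \<bar>ln y\<bar> * \<bar>ln y\<bar>" by (intro mult_left_mono) auto
      thus ?thesis by (simp add: power2_eq_square)
    next
      case True
      have "0 \<le> (ln y)\<^sup>2" by simp
      with True show ?thesis by linarith
    qed
    hence "hk b y * \<bar>ln y\<bar> \<le> hk b y * (1 + (ln y)\<^sup>2)" by (intro mult_left_mono h)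
    thus "norm (hk b y * ln y) \<le> norm (hk b y + hk b y * (ln y)\<^sup>2)"
      using h by (simp add: abs_mult algebra_simps)
  qed
qed measurable

lemma hk_exp_ineq:
  assumes "b > 0" "b + e > 0"
  shows "hk b y + e * (hk b y * ln y) \<le> hk (b + e) y"
proof (cases "y > 0")
  case True
  have "1 + e * ln y \<le> exp (e * ln y)" by (rule exp_ge_add_one_self)
  also have "exp (e * ln y) = y powr e" using True by (simp add: powr_def)
  finally have "hk b y * (1 + e * ln y) \<le> hk b y * y powr e" by (intro mult_left_mono hk_nonneg)
  thus ?thesis using True by (simp add: hk_def algebra_simps powr_add[symmetric])
qed (simp add: hk_def)

lemma hk_ln_integral: assumes b: "b > 0"
  shows "(\<integral>y. hk b y * ln y \<partial>lborel) = Gamma b * Digamma b"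
proof -
  define J where "J = (\<integral>y. hk b y * ln y \<partial>lborel)"
  have ineq: "Gamma b + e * J \<le> Gamma (b + e)" if "b + e > 0" for e
  proof -
    have i1: "integrable lborel (\<lambda>y. hk b y + e * (hk b y * ln y))"
      by (rule Bochner_Integration.integrable_add[OF hk_int[OF b] Bochner_Integration.integrable_mult_right[OF hk_ln_int[OF b]]])
    have "(\<integral>y. hk b y + e * (hk b y * ln y) \<partial>lborel) \<le> (\<integral>y. hk (b + e) y \<partial>lborel)"
      by (rule integral_mono[OF i1 hk_int[OF that] hk_exp_ineq[OF b that]])
    also have "(\<integral>y. hk b y + e * (hk b y * ln y) \<partial>lborel) = Gamma b + e * J"
      by (subst Bochner_Integration.integral_add[OF hk_int[OF b] Bochner_Integration.integrable_mult_right[OF hk_ln_int[OF b]]])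
         (simp add: J_def hk_integral[OF b])
    finally show ?thesis using that by (simp add: hk_integral)
  qed
  have nz: "b \<notin> \<int>\<^sub>\<le>\<^sub>0" using b by (auto elim!: nonpos_Ints_cases)
  have D: "((\<lambda>y. (Gamma y - Gamma b) / (y - b)) \<longlongrightarrow> Gamma b * Digamma b) (at b)"
    using has_field_derivative_Gamma[OF nz, of UNIV] by (simp add: has_field_derivative_iff)
  have Dr: "((\<lambda>y. (Gamma y - Gamma b) / (y - b)) \<longlongrightarrow> Gamma b * Digamma b) (at_right b)"
   and Dl: "((\<lambda>y. (Gamma y - Gamma b) / (y - b)) \<longlongrightarrow> Gamma b * Digamma b) (at_left b)"
    using D by (simp_all add: filterlim_at_split)
  have "J \<le> Gamma b * Digamma b"
  proof (rule tendsto_lowerbound[OF Dr])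
    show "\<forall>\<^sub>F y in at_right b. J \<le> (Gamma y - Gamma b) / (y - b)"
    proof (intro eventually_at_rightI[of b "b+1"])
      fix y assume y: "y \<in> {b<..<b+1}"
      have "Gamma b + (y - b) * J \<le> Gamma (b + (y - b))" using y b by (intro ineq) auto
      thus "J \<le> (Gamma y - Gamma b) / (y - b)" using y by (simp add: field_simps)
    qed simp
  qed simp
  moreover have "J \<ge> Gamma b * Digamma b"
  proof (rule tendsto_upperbound[OF Dl])
    show "\<forall>\<^sub>F y in at_left b. (Gamma y - Gamma b) / (y - b) \<le> J"
    proof (intro eventually_at_leftI[of 0 b])
      fix y assume y: "y \<in> {0<..<b}"
      have "Gamma b + (y - b) * J \<le> Gamma (b + (y - b))" using y b by (intro ineq) auto
      thus "(Gamma y - Gamma b) / (y - b) \<le> J" using y by (simp add: field_simps)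
    qed (use b in simp)
  qed simp
  ultimately show ?thesis by (simp add: J_def)
qed

lemma Digamma_less_ln: assumes x: "(x::real) > 0" shows "Digamma x < ln x"
proof -
  have "\<exists>z>x. z < x + 1 \<and> ln_Gamma (x + 1) - ln_Gamma x = (x + 1 - x) * Digamma z"
    by (rule MVT2) (use x in \<open>auto intro!: has_field_derivative_ln_Gamma_real\<close>)
  then obtain z where z: "x < z" "z < x + 1" "ln_Gamma (x + 1) - ln_Gamma x = Digamma z" by auto
  have nz: "x \<notin> \<int>\<^sub>\<le>\<^sub>0" using x by (auto elim!: nonpos_Ints_cases)
  have "ln_Gamma (x + 1) - ln_Gamma x = ln x"
    using x Gamma_real_pos[of x] by (simp add: ln_Gamma_real_pos less_imp_neq[symmetric] Gamma_plus1[OF nz] ln_mult)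
  moreover have "Digamma x < Digamma z" using x z by (intro Digamma_real_strict_mono) auto
  ultimately show ?thesis using z by simp
qed

lemma gdens_hk: assumes th: "th > 0"
  shows "gdens a th x = hk a (x / th) / (Gamma a * th)"
proof (cases "x > 0")
  case True
  have e1: "x powr (a - 1) = (x / th) powr (a - 1) * th powr (a - 1)" using True th by (simp add: powr_divide)
  have e2: "th powr a = th powr (a - 1) * th"
    using th powr_add[of th "a - 1" 1] by simp
  have nz: "th powr (a - 1) \<noteq> 0" using th by simp
  show ?thesis using True th nz unfolding gdens_def hk_def e1 e2 by (simp add: field_simps)
next
  case False
  hence "\<not> x / th > 0" using th by (simp add: divide_nonpos_pos not_less)
  thus ?thesis using False by (simp add: gdens_def hk_def)
qed

lemma gdens_nonneg: "a > 0 \<Longrightarrow> th > 0 \<Longrightarrow> gdens a th x \<ge> 0"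
  by (simp add: gdens_hk hk_nonneg)

lemma gdens_meas[measurable]: "(\<lambda>x. gdens a th x) \<in> borel_measurable borel"
  unfolding gdens_def by measurable

lemma AE_interval_ex:
  assumes "AE x in lborel. P x" "a < (b::real)"
  shows "\<exists>x\<in>{a<..<b}. P x"
proof (rule ccontr)
  assume "\<not> ?thesis"
  hence sub: "{a<..<b} \<subseteq> {x. \<not> P x}" by auto
  from assms(1) obtain N where N: "{x \<in> space lborel. \<not> P x} \<subseteq> N" "N \<in> sets lborel" "emeasure lborel N = 0"
    by (auto elim!: AE_E)
  have "{a<..<b} \<subseteq> N" using sub N(1) by auto
  hence "emeasure lborel {a<..<b} \<le> emeasure lborel N" by (intro emeasure_mono N(2))
  thus False using N(3) assms(2) by simp
qed

definition Vb :: "real \<Rightarrow> real" where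
  "Vb b = (\<integral>y. hk b y * (ln y)\<^sup>2 \<partial>lborel) / Gamma b - (Digamma b)\<^sup>2"

lemma hk_q_int: "b > 0 \<Longrightarrow> integrable lborel (\<lambda>y. hk b y * (ln y - w)\<^sup>2)"
proof -
  assume b: "b > 0"
  have "integrable lborel (\<lambda>y. hk b y * (ln y)\<^sup>2 - (2 * w) * (hk b y * ln y) + w\<^sup>2 * hk b y)"
    by (intro Bochner_Integration.integrable_add Bochner_Integration.integrable_diff
          Bochner_Integration.integrable_mult_right hk_int hk_ln_int hk_ln2_int b)
  thus ?thesis by (rule back_subst[where P="integrable lborel"]) (auto simp: power2_eq_square algebra_simps)
qed

lemma hk_q_integral: assumes b: "b > 0"
  shows "(\<integral>y. hk b y * (ln y - w)\<^sup>2 \<partial>lborel) = Gamma b * ((Digamma b - w)\<^sup>2 + Vb b)"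
proof -
  have "(\<integral>y. hk b y * (ln y - w)\<^sup>2 \<partial>lborel) =
        (\<integral>y. hk b y * (ln y)\<^sup>2 - (2 * w) * (hk b y * ln y) + w\<^sup>2 * hk b y \<partial>lborel)"
    by (intro Bochner_Integration.integral_cong) (auto simp: power2_eq_square algebra_simps)
  also have "\<dots> = (\<integral>y. hk b y * (ln y)\<^sup>2 \<partial>lborel) - (2 * w) * (Gamma b * Digamma b) + w\<^sup>2 * Gamma b"
    using b by (simp add: Bochner_Integration.integral_add Bochner_Integration.integral_diff
          Bochner_Integration.integrable_add Bochner_Integration.integrable_diff
          hk_int hk_ln_int hk_ln2_int hk_ln_integral hk_integral)
  also have "\<dots> = Gamma b * ((Digamma b - w)\<^sup>2 + Vb b)"
  proof -
    have "Gamma b \<noteq> 0" using Gamma_real_pos[OF b] by simp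
    thus ?thesis by (simp add: Vb_def field_simps power2_eq_square)
  qed
  finally show ?thesis .
qed

lemma hk_q_nn: assumes b: "b > 0"
  shows "(\<integral>\<^sup>+y. ennreal (hk b y * (ln y - w)\<^sup>2) \<partial>lborel) = ennreal (Gamma b * ((Digamma b - w)\<^sup>2 + Vb b))"
  using nn_integral_eq_integral[OF hk_q_int[OF b]] hk_q_integral[OF b] by (simp add: hk_nonneg)

lemma KG: assumes b: "b > 0" and k: "k > 0"
  shows "(\<integral>\<^sup>+s. ennreal (hk b (k * s) * (ln s - w)\<^sup>2) \<partial>lborel)
      = ennreal (Gamma b * ((Digamma b - ln k - w)\<^sup>2 + Vb b) / k)"
proof -
  have "(\<integral>\<^sup>+s. ennreal (hk b (k * s) * (ln s - w)\<^sup>2) \<partial>lborel)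
      = ennreal \<bar>1/k\<bar> * (\<integral>\<^sup>+y. ennreal (hk b (k * (0 + 1/k * y)) * (ln (0 + 1/k * y) - w)\<^sup>2) \<partial>lborel)"
    using k by (intro nn_integral_real_affine) auto
  also have "(\<integral>\<^sup>+y. ennreal (hk b (k * (0 + 1/k * y)) * (ln (0 + 1/k * y) - w)\<^sup>2) \<partial>lborel)
      = (\<integral>\<^sup>+y. ennreal (hk b y * (ln y - (ln k + w))\<^sup>2) \<partial>lborel)"
  proof (intro nn_integral_cong)
    fix y :: real
    show "ennreal (hk b (k * (0 + 1/k * y)) * (ln (0 + 1/k * y) - w)\<^sup>2) = ennreal (hk b y * (ln y - (ln k + w))\<^sup>2)"
    proof (cases "y > 0")
      case True thus ?thesis using k by (simp add: ln_div algebra_simps)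
    qed (use k in \<open>simp add: hk_def\<close>)
  qed
  also have "\<dots> = ennreal (Gamma b * ((Digamma b - (ln k + w))\<^sup>2 + Vb b))" by (rule hk_q_nn[OF b])
  finally show ?thesis using k
    by (simp add: ennreal_mult'[symmetric] divide_simps diff_diff_eq)
qed

lemma gd_subst:
  assumes th: "th > 0" and f[measurable]: "f \<in> borel_measurable borel"
  shows "(\<integral>\<^sup>+x. f x * ennreal (gdens a th x) \<partial>lborel) = (\<integral>\<^sup>+y. f (th * y) * ennreal (hk a y / Gamma a) \<partial>lborel)"
proof -
  have "(\<integral>\<^sup>+x. f x * ennreal (gdens a th x) \<partial>lborel)
      = ennreal \<bar>th\<bar> * (\<integral>\<^sup>+y. f (0 + th * y) * ennreal (gdens a th (0 + th * y)) \<partial>lborel)"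
    using th by (intro nn_integral_real_affine) auto
  also have "\<dots> = (\<integral>\<^sup>+y. ennreal th * (f (th * y) * ennreal (gdens a th (th * y))) \<partial>lborel)"
    using th by (subst nn_integral_cmult) auto
  also have "\<dots> = (\<integral>\<^sup>+y. f (th * y) * ennreal (hk a y / Gamma a) \<partial>lborel)"
  proof (intro nn_integral_cong)
    fix y :: real
    have "gdens a th (th * y) = hk a y / (Gamma a * th)" using th by (simp add: gdens_hk)
    hence "ennreal th * ennreal (gdens a th (th * y)) = ennreal (hk a y / Gamma a)"
      using th by (simp add: ennreal_mult'[symmetric])
    thus "ennreal th * (f (th * y) * ennreal (gdens a th (th * y))) = f (th * y) * ennreal (hk a y / Gamma a)"
      by (metis mult.left_commute)
  qed
  finally show ?thesis .
qed

lemma gdens_mass: assumes a: "a > 0" and th: "th > 0"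
  shows "(\<integral>\<^sup>+x. ennreal (gdens a th x) \<partial>lborel) = 1"
proof -
  have "(\<integral>\<^sup>+x. ennreal (gdens a th x) \<partial>lborel) = (\<integral>\<^sup>+x. 1 * ennreal (gdens a th x) \<partial>lborel)" by simp
  also have "\<dots> = (\<integral>\<^sup>+y. 1 * ennreal (hk a y / Gamma a) \<partial>lborel)"
    by (rule gd_subst[OF th]) simp
  also have "\<dots> = (\<integral>\<^sup>+y. ennreal (1 / Gamma a) * ennreal (hk a y) \<partial>lborel)"
    using a by (intro nn_integral_cong) (simp add: ennreal_mult'[symmetric])
  also have "\<dots> = ennreal (1 / Gamma a) * ennreal (Gamma a)"
    using a by (subst nn_integral_cmult) (auto simp: hk_nn)
  also have "\<dots> = 1"
  proof -
    have g: "Gamma a > 0" using a by simp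
    hence "ennreal (1 / Gamma a) * ennreal (Gamma a) = ennreal (1 / Gamma a * Gamma a)"
      by (simp add: ennreal_mult'[symmetric])
    also have "1 / Gamma a * Gamma a = 1" using g by simp
    finally show ?thesis by simp
  qed
  finally show ?thesis .
qed

lemma gdens_pos: "a > 0 \<Longrightarrow> th > 0 \<Longrightarrow> x > 0 \<Longrightarrow> gdens a th x > 0"
  by (simp add: gdens_def)

definition Tq :: "real \<Rightarrow> real \<Rightarrow> real \<Rightarrow> ennreal" where
  "Tq a s t = (\<integral>\<^sup>+y. ennreal (indicator {s<..} y * (hk a y * (ln y - t)\<^sup>2)) \<partial>lborel)"

lemma Tq_int: "a > 0 \<Longrightarrow> integrable lborel (\<lambda>y. indicator {s<..} y * (hk a y * (ln y - t)\<^sup>2))"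
  using integrable_mult_indicator[OF _ hk_q_int, of "{s<..}" a t] by simp

lemma Tq_real: assumes "a > 0"
  shows "Tq a s t = ennreal (\<integral>y. indicator {s<..} y * (hk a y * (ln y - t)\<^sup>2) \<partial>lborel)"
  unfolding Tq_def using assms by (intro nn_integral_eq_integral Tq_int) (auto simp: hk_nonneg)

lemma Tq_le: assumes a: "a > 0" shows "Tq a s t \<le> ennreal (Gamma a * ((Digamma a - t)\<^sup>2 + Vb a))"
  unfolding Tq_def hk_q_nn[OF a, symmetric]
  by (intro nn_integral_mono) (auto simp: indicator_def hk_nonneg)

lemma TL:
  assumes a: "a > 0" and w: "w < Digamma a"
  shows "Tq a s (Digamma a) < Tq a s w"
proof -
  define p where "p = Digamma a"
  define G1 where "G1 y = indicator {s<..} y * (hk a y * ln y - p * hk a y)" for y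
  define G0 where "G0 y = indicator {s<..} y * hk a y" for y
  have iG1: "integrable lborel G1" unfolding G1_def
    using integrable_mult_indicator[OF _ Bochner_Integration.integrable_diff[OF hk_ln_int[OF a]
      Bochner_Integration.integrable_mult_right[OF hk_int[OF a]]], of "{s<..}" p] by simp
  have iG0: "integrable lborel G0" unfolding G0_def
    using integrable_mult_indicator[OF _ hk_int[OF a], of "{s<..}"] by simp
  have G1nn: "integral\<^sup>L lborel G1 \<ge> 0"
  proof (cases "s \<le> exp p")
    case True
    define H where "H y = indicator {..s} y * (hk a y * ln y - p * hk a y)" for y
    have fint: "integrable lborel (\<lambda>y. hk a y * ln y - p * hk a y)"
      by (intro Bochner_Integration.integrable_diff Bochner_Integration.integrable_mult_right hk_ln_int hk_int a)
    have iH: "integrable lborel H" unfolding H_def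
      using integrable_mult_indicator[OF _ fint, of "{..s}"] by simp
    have "G1 = (\<lambda>y. (hk a y * ln y - p * hk a y) - H y)"
      by (auto simp: G1_def H_def indicator_def fun_eq_iff)
    hence "integral\<^sup>L lborel G1 = (\<integral>y. hk a y * ln y - p * hk a y \<partial>lborel) - integral\<^sup>L lborel H"
      using fint iH by simp
    also have "(\<integral>y. hk a y * ln y - p * hk a y \<partial>lborel) = 0"
      using a by (simp add: hk_ln_int hk_int hk_ln_integral hk_integral p_def)
    finally have e: "integral\<^sup>L lborel G1 = 0 - integral\<^sup>L lborel H" .
    have "integral\<^sup>L lborel H \<le> 0"
    proof -
      have "0 \<le> integral\<^sup>L lborel (\<lambda>y. - H y)"
      proof (intro integral_nonneg_AE AE_I2)
        fix y
        show "0 \<le> - H y"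
        proof (cases "y > 0 \<and> y \<le> s")
          case True
          hence "ln y \<le> ln (exp p)" using \<open>s \<le> exp p\<close> by (subst ln_le_cancel_iff) auto
          hence "ln y \<le> p" by simp
          hence "hk a y * ln y \<le> hk a y * p" by (intro mult_left_mono hk_nonneg)
          thus ?thesis using True by (simp add: H_def mult.commute)
        qed (auto simp: H_def hk_def)
      qed
      thus ?thesis by simp
    qed
    thus ?thesis using e by simp
  next
    case False
    have "0 \<le> G1 y" for y
    proof (cases "y > s")
      case True
      have "exp p > 0" by simp
      hence y0: "y > 0" using True False by linarith
      have "ln (exp p) < ln y" using True False y0 by (subst ln_less_cancel_iff) auto
      hence "p \<le> ln y" by simp
      hence "hk a y * p \<le> hk a y * ln y" by (intro mult_left_mono hk_nonneg)
      thus ?thesis using True by (simp add: G1_def mult.commute)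
    qed (simp add: G1_def)
    thus ?thesis by (intro integral_nonneg_AE AE_I2)
  qed
  have G0pos: "integral\<^sup>L lborel G0 > 0"
  proof -
    have nn: "AE y in lborel. 0 \<le> G0 y" by (intro AE_I2) (simp add: G0_def hk_nonneg)
    have "integral\<^sup>L lborel G0 \<noteq> 0"
    proof
      assume "integral\<^sup>L lborel G0 = 0"
      hence "AE y in lborel. G0 y = 0" using integral_nonneg_eq_0_iff_AE[OF iG0 nn] by simp
      from AE_interval_ex[OF this, of "max s 0" "max s 0 + 1"] obtain y
        where y: "y \<in> {max s 0<..<max s 0 + 1}" "G0 y = 0" by auto
      have "G0 y = hk a y" using y(1) by (simp add: G0_def)
      moreover have "hk a y > 0" using y(1) by (simp add: hk_def)
      ultimately show False using y(2) by simp
    qed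
    moreover have "integral\<^sup>L lborel G0 \<ge> 0" using nn by (rule integral_nonneg_AE)
    ultimately show ?thesis by simp
  qed
  have eq: "indicator {s<..} y * (hk a y * (ln y - w)\<^sup>2) - indicator {s<..} y * (hk a y * (ln y - p)\<^sup>2)
        = (p - w) * (2 * G1 y + (p - w) * G0 y)" for y
    by (simp add: G1_def G0_def indicator_def power2_eq_square algebra_simps)
  have "(\<integral>y. indicator {s<..} y * (hk a y * (ln y - w)\<^sup>2) \<partial>lborel) - (\<integral>y. indicator {s<..} y * (hk a y * (ln y - p)\<^sup>2) \<partial>lborel)
      = (\<integral>y. (p - w) * (2 * G1 y + (p - w) * G0 y) \<partial>lborel)"
    unfolding eq[symmetric] using Tq_int[OF a] by (subst Bochner_Integration.integral_diff) auto
  also have "\<dots> = (p - w) * (2 * integral\<^sup>L lborel G1 + (p - w) * integral\<^sup>L lborel G0)"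
    using iG1 iG0 by simp
  also have "\<dots> > 0" using w G1nn G0pos unfolding p_def[symmetric]
    by (intro mult_pos_pos add_nonneg_pos) auto
  finally have lt: "(\<integral>y. indicator {s<..} y * (hk a y * (ln y - p)\<^sup>2) \<partial>lborel)
      < (\<integral>y. indicator {s<..} y * (hk a y * (ln y - w)\<^sup>2) \<partial>lborel)" by simp
  have nn: "0 \<le> (\<integral>y. indicator {s<..} y * (hk a y * (ln y - p)\<^sup>2) \<partial>lborel)"
    by (intro integral_nonneg_AE AE_I2) (simp add: hk_nonneg)
  show ?thesis unfolding Tq_real[OF a] p_def[symmetric] using lt nn by (simp add: ennreal_less_iff)
qed

lemma inner_tail:
  assumes a: "a > 0" and th: "th > 0"
  shows "(\<integral>\<^sup>+x. ennreal (indicator {s<..} x * (ln x - t - ln th)\<^sup>2) * ennreal (gdens a th x) \<partial>lborel)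
       = ennreal (1 / Gamma a) * Tq a (s / th) t"
proof -
  have "(\<integral>\<^sup>+x. ennreal (indicator {s<..} x * (ln x - t - ln th)\<^sup>2) * ennreal (gdens a th x) \<partial>lborel)
      = (\<integral>\<^sup>+y. ennreal (indicator {s<..} (th * y) * (ln (th * y) - t - ln th)\<^sup>2) * ennreal (hk a y / Gamma a) \<partial>lborel)"
    by (rule gd_subst[OF th]) measurable
  also have "\<dots> = (\<integral>\<^sup>+y. ennreal (1 / Gamma a) * ennreal (indicator {s / th<..} y * (hk a y * (ln y - t)\<^sup>2)) \<partial>lborel)"
  proof (intro nn_integral_cong)
    fix y :: real
    have g: "Gamma a > 0" using a by simp
    show "ennreal (indicator {s<..} (th * y) * (ln (th * y) - t - ln th)\<^sup>2) * ennreal (hk a y / Gamma a)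
        = ennreal (1 / Gamma a) * ennreal (indicator {s / th<..} y * (hk a y * (ln y - t)\<^sup>2))"
    proof (cases "y > 0")
      case True
      have i: "indicator {s<..} (th * y) = (indicator {s / th<..} y :: real)"
        using th by (auto simp: indicator_def field_simps)
      have l: "ln (th * y) - t - ln th = ln y - t" using th True by (simp add: ln_mult)
      show ?thesis unfolding i l using g hk_nonneg[of a y]
        by (simp add: ennreal_mult'[symmetric] ennreal_mult''[symmetric] mult_ac)
    qed (simp add: hk_def)
  qed
  also have "\<dots> = ennreal (1 / Gamma a) * Tq a (s / th) t"
    unfolding Tq_def by (subst nn_integral_cmult) auto
  finally show ?thesis .
qed

lemma inner_tail':
  assumes a: "a > 0" and th: "th > 0"
  shows "(\<integral>\<^sup>+x. ennreal (indicator {s..} x * (ln x - t - ln th)\<^sup>2) * ennreal (gdens a th x) \<partial>lborel)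
       = ennreal (1 / Gamma a) * Tq a (s / th) t"
proof -
  have "(\<integral>\<^sup>+x. ennreal (indicator {s..} x * (ln x - t - ln th)\<^sup>2) * ennreal (gdens a th x) \<partial>lborel)
      = (\<integral>\<^sup>+x. ennreal (indicator {s<..} x * (ln x - t - ln th)\<^sup>2) * ennreal (gdens a th x) \<partial>lborel)"
    by (intro nn_integral_cong_AE eventually_mono[OF AE_lborel_singleton[of s]]) (auto simp: indicator_def)
  thus ?thesis using inner_tail[OF a th] by simp
qed

lemma risk_delta_split:
  assumes a: "a > 0" and th1: "th1 > 0" and th2: "th2 > 0"
  shows "risk a th1 th2 (delta t)
    = (\<integral>\<^sup>+x2. ennreal (gdens a th2 x2) * (ennreal (1 / Gamma a) * Tq a (x2 / th1) t) \<partial>lborel)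
    + (\<integral>\<^sup>+x1. ennreal (gdens a th1 x1) * (ennreal (1 / Gamma a) * Tq a (x1 / th2) t) \<partial>lborel)"
proof -
  define A where "A p = ennreal (indicator {p. snd p \<le> fst p} p * ((ln (fst p) - t - ln th1)\<^sup>2 * gdens a th1 (fst p) * gdens a th2 (snd p)))" for p :: "real \<times> real"
  define B where "B p = ennreal (indicator {p. fst p < snd p} p * ((ln (snd p) - t - ln th2)\<^sup>2 * gdens a th1 (fst p) * gdens a th2 (snd p)))" for p :: "real \<times> real"
  have Am[measurable]: "A \<in> borel_measurable (lborel \<Otimes>\<^sub>M lborel)" unfolding A_def by measurable
  have Bm[measurable]: "B \<in> borel_measurable (lborel \<Otimes>\<^sub>M lborel)" unfolding B_def by measurable
  have "risk a th1 th2 (delta t) = (\<integral>\<^sup>+p. A p + B p \<partial>(lborel \<Otimes>\<^sub>M lborel))"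
    unfolding risk_def
  proof (intro nn_integral_cong)
    fix p :: "real \<times> real"
    obtain x1 x2 where p: "p = (x1, x2)" by (cases p)
    have n1: "gdens a th1 x1 \<ge> 0" using a th1 by (rule gdens_nonneg)
    have n2: "gdens a th2 x2 \<ge> 0" using a th2 by (rule gdens_nonneg)
    show "ennreal ((delta t (fst p) (snd p) - HS th1 th2 (fst p) (snd p))\<^sup>2 * gdens a th1 (fst p) * gdens a th2 (snd p)) = A p + B p"
      using n1 n2 by (cases "x2 \<le> x1") (auto simp: p A_def B_def delta_def HS_def max_def)
  qed
  also have "\<dots> = (\<integral>\<^sup>+p. A p \<partial>(lborel \<Otimes>\<^sub>M lborel)) + (\<integral>\<^sup>+p. B p \<partial>(lborel \<Otimes>\<^sub>M lborel))"
    by (rule nn_integral_add) auto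
  also have "(\<integral>\<^sup>+p. A p \<partial>(lborel \<Otimes>\<^sub>M lborel)) = (\<integral>\<^sup>+x2. \<integral>\<^sup>+x1. A (x1, x2) \<partial>lborel \<partial>lborel)"
    by (rule lborel_pair.nn_integral_snd[symmetric]) measurable
  also have "\<dots> = (\<integral>\<^sup>+x2. ennreal (gdens a th2 x2) * (ennreal (1 / Gamma a) * Tq a (x2 / th1) t) \<partial>lborel)"
  proof (intro nn_integral_cong)
    fix x2 :: real
    have "(\<integral>\<^sup>+x1. A (x1, x2) \<partial>lborel) = (\<integral>\<^sup>+x1. ennreal (gdens a th2 x2) *
        (ennreal (indicator {x2..} x1 * (ln x1 - t - ln th1)\<^sup>2) * ennreal (gdens a th1 x1)) \<partial>lborel)"
    proof (intro nn_integral_cong)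
      fix x1 :: real
      have n1: "gdens a th1 x1 \<ge> 0" using a th1 by (rule gdens_nonneg)
      have n2: "gdens a th2 x2 \<ge> 0" using a th2 by (rule gdens_nonneg)
      show "A (x1, x2) = ennreal (gdens a th2 x2) * (ennreal (indicator {x2..} x1 * (ln x1 - t - ln th1)\<^sup>2) * ennreal (gdens a th1 x1))"
        using n1 n2 by (simp add: A_def indicator_def ennreal_mult'[symmetric] ennreal_mult''[symmetric] mult_ac)
    qed
    also have "\<dots> = ennreal (gdens a th2 x2) * (\<integral>\<^sup>+x1. ennreal (indicator {x2..} x1 * (ln x1 - t - ln th1)\<^sup>2) * ennreal (gdens a th1 x1) \<partial>lborel)"
      by (rule nn_integral_cmult) measurable
    also have "\<dots> = ennreal (gdens a th2 x2) * (ennreal (1 / Gamma a) * Tq a (x2 / th1) t)"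
      by (simp add: inner_tail'[OF a th1])
    finally show "(\<integral>\<^sup>+x1. A (x1, x2) \<partial>lborel) = ennreal (gdens a th2 x2) * (ennreal (1 / Gamma a) * Tq a (x2 / th1) t)" .
  qed
  also have "(\<integral>\<^sup>+p. B p \<partial>(lborel \<Otimes>\<^sub>M lborel)) = (\<integral>\<^sup>+x1. \<integral>\<^sup>+x2. B (x1, x2) \<partial>lborel \<partial>lborel)"
    by (rule lborel.nn_integral_fst[symmetric]) measurable
  also have "\<dots> = (\<integral>\<^sup>+x1. ennreal (gdens a th1 x1) * (ennreal (1 / Gamma a) * Tq a (x1 / th2) t) \<partial>lborel)"
  proof (intro nn_integral_cong)
    fix x1 :: real
    have "(\<integral>\<^sup>+x2. B (x1, x2) \<partial>lborel) = (\<integral>\<^sup>+x2. ennreal (gdens a th1 x1) *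
        (ennreal (indicator {x1<..} x2 * (ln x2 - t - ln th2)\<^sup>2) * ennreal (gdens a th2 x2)) \<partial>lborel)"
    proof (intro nn_integral_cong)
      fix x2 :: real
      have n1: "gdens a th1 x1 \<ge> 0" using a th1 by (rule gdens_nonneg)
      have n2: "gdens a th2 x2 \<ge> 0" using a th2 by (rule gdens_nonneg)
      show "B (x1, x2) = ennreal (gdens a th1 x1) * (ennreal (indicator {x1<..} x2 * (ln x2 - t - ln th2)\<^sup>2) * ennreal (gdens a th2 x2))"
        using n1 n2 by (simp add: B_def indicator_def ennreal_mult'[symmetric] ennreal_mult''[symmetric] mult_ac)
    qed
    also have "\<dots> = ennreal (gdens a th1 x1) * (\<integral>\<^sup>+x2. ennreal (indicator {x1<..} x2 * (ln x2 - t - ln th2)\<^sup>2) * ennreal (gdens a th2 x2) \<partial>lborel)"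
      by (rule nn_integral_cmult) measurable
    also have "\<dots> = ennreal (gdens a th1 x1) * (ennreal (1 / Gamma a) * Tq a (x1 / th2) t)"
      by (simp add: inner_tail[OF a th2])
    finally show "(\<integral>\<^sup>+x2. B (x1, x2) \<partial>lborel) = ennreal (gdens a th1 x1) * (ennreal (1 / Gamma a) * Tq a (x1 / th2) t)" .
  qed
  finally show ?thesis .
qed

lemma hk_meas'[measurable]: "(\<lambda>y. hk b y) \<in> borel_measurable borel"
  using hk_meas by simp

lemma Tq_meas[measurable]: "(\<lambda>s. Tq a s t) \<in> borel_measurable borel"
proof -
  have "(\<lambda>s. Tq a s t) = (\<lambda>s. \<integral>\<^sup>+y. ennreal ((if s < y then 1 else 0) * (hk a y * (ln y - t)\<^sup>2)) \<partial>lborel)"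
    by (auto simp: Tq_def indicator_def intro!: ext nn_integral_cong)
  also have "\<dots> \<in> borel_measurable borel" by measurable
  finally show ?thesis .
qed

lemma part_fin:
  assumes a: "a > 0" and th: "th > 0" and th': "th' > 0"
  shows "(\<integral>\<^sup>+x. ennreal (gdens a th x) * (ennreal (1 / Gamma a) * Tq a (x / th') t) \<partial>lborel) < \<infinity>"
proof -
  define K where "K = ennreal (1 / Gamma a) * ennreal (Gamma a * ((Digamma a - t)\<^sup>2 + Vb a))"
  have "(\<integral>\<^sup>+x. ennreal (gdens a th x) * (ennreal (1 / Gamma a) * Tq a (x / th') t) \<partial>lborel)
     \<le> (\<integral>\<^sup>+x. K * ennreal (gdens a th x) \<partial>lborel)"
    unfolding K_def by (intro nn_integral_mono) (simp add: mult_ac mult_left_mono Tq_le[OF a])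
  also have "\<dots> = K" by (subst nn_integral_cmult) (auto simp: gdens_mass[OF a th])
  also have "K < \<infinity>" unfolding K_def by (simp add: ennreal_mult_less_top)
  finally show ?thesis .
qed

lemma risk_delta_fin:
  assumes a: "a > 0" and th1: "th1 > 0" and th2: "th2 > 0"
  shows "risk a th1 th2 (delta t) < \<infinity>"
  unfolding risk_delta_split[OF a th1 th2] using part_fin[OF a th2 th1] part_fin[OF a th1 th2]
  by simp

lemma risk_delta_mono_B:
  assumes a: "a > 0" and th1: "th1 > 0" and th2: "th2 > 0" and c: "c < Digamma a"
  shows "risk a th1 th2 (delta (Digamma a)) < risk a th1 th2 (delta c)"
proof -
  define F where "F t th th' x = ennreal (gdens a th x) * (ennreal (1 / Gamma a) * Tq a (x / th') t)" for t th th' x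
  have le: "F (Digamma a) th th' x \<le> F c th th' x" for th th' x
    unfolding F_def using TL[OF a c, of "x / th'"] by (intro mult_left_mono) auto
  have lt: "F (Digamma a) th th' x < F c th th' x" if "th > 0" "x > 0" for th th' x
  proof -
    have "ennreal (1 / Gamma a) * Tq a (x / th') (Digamma a) < ennreal (1 / Gamma a) * Tq a (x / th') c"
      using a by (intro ennreal_mult_strict_left_mono TL[OF a c]) auto
    thus ?thesis unfolding F_def by (rule ennreal_mult_strict_left_mono) (use gdens_pos[OF a that(1) that(2)] in auto)
  qed
  have Fm[measurable]: "F t th th' \<in> borel_measurable lborel" for t th th'
    unfolding F_def by measurable
  have A: "(\<integral>\<^sup>+x. F (Digamma a) th2 th1 x \<partial>lborel) < (\<integral>\<^sup>+x. F c th2 th1 x \<partial>lborel)"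
  proof (rule nn_integral_less)
    show "(\<integral>\<^sup>+x. F (Digamma a) th2 th1 x \<partial>lborel) \<noteq> \<infinity>"
      using part_fin[OF a th2 th1, of "Digamma a"] unfolding F_def by (simp add: less_top)
    show "AE x in lborel. F (Digamma a) th2 th1 x \<le> F c th2 th1 x" by (intro AE_I2 le)
    show "\<not> (AE x in lborel. F c th2 th1 x \<le> F (Digamma a) th2 th1 x)"
    proof
      assume "AE x in lborel. F c th2 th1 x \<le> F (Digamma a) th2 th1 x"
      from AE_interval_ex[OF this, of 0 1] obtain x where "x \<in> {0<..<1}" "F c th2 th1 x \<le> F (Digamma a) th2 th1 x" by auto
      thus False using lt[OF th2, of x th1] by auto
    qed
  qed auto
  have B: "(\<integral>\<^sup>+x. F (Digamma a) th1 th2 x \<partial>lborel) \<le> (\<integral>\<^sup>+x. F c th1 th2 x \<partial>lborel)"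
    by (intro nn_integral_mono le)
  have Bfin: "(\<integral>\<^sup>+x. F (Digamma a) th1 th2 x \<partial>lborel) \<noteq> \<infinity>"
    using part_fin[OF a th1 th2, of "Digamma a"] unfolding F_def by (simp add: less_top)
  have "(\<integral>\<^sup>+x. F (Digamma a) th2 th1 x \<partial>lborel) + (\<integral>\<^sup>+x. F (Digamma a) th1 th2 x \<partial>lborel)
      < (\<integral>\<^sup>+x. F c th2 th1 x \<partial>lborel) + (\<integral>\<^sup>+x. F (Digamma a) th1 th2 x \<partial>lborel)"
    using A Bfin by (simp add: ennreal_add_left_cancel_less add.commute[of _ "(\<integral>\<^sup>+x. F (Digamma a) th1 th2 x \<partial>lborel)"])
  also have "\<dots> \<le> (\<integral>\<^sup>+x. F c th2 th1 x \<partial>lborel) + (\<integral>\<^sup>+x. F c th1 th2 x \<partial>lborel)"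
    using B by (rule add_left_mono)
  finally show ?thesis unfolding risk_delta_split[OF a th1 th2] F_def .
qed

theorem domB:
  assumes a: "a > 0" and c: "c < c1 a"
  shows "dominates a (delta (c1 a)) (delta c)"
  unfolding dominates_def c1_def
proof (intro conjI allI impI)
  fix th1 th2 :: real assume "th1 > 0" "th2 > 0"
  thus "risk a th1 th2 (delta (Digamma a)) \<le> risk a th1 th2 (delta c)"
    using risk_delta_mono_B[OF a _ _ c[unfolded c1_def]] by (simp add: less_imp_le)
next
  show "\<exists>th1>0. \<exists>th2>0. risk a th1 th2 (delta (Digamma a)) < risk a th1 th2 (delta c)"
    using risk_delta_mono_B[OF a _ _ c[unfolded c1_def], of 1 1] by (intro exI[of _ "1::real"] conjI) auto
qed

lemma DEC:
  fixes F :: "real \<times> real \<Rightarrow> ennreal"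
  assumes Fm[measurable]: "F \<in> borel_measurable (lborel \<Otimes>\<^sub>M lborel)"
    and F0: "\<And>x1 x2. x1 \<le> 0 \<or> x2 \<le> 0 \<Longrightarrow> F (x1, x2) = 0"
  shows "(\<integral>\<^sup>+p. F p \<partial>(lborel \<Otimes>\<^sub>M lborel))
     = (\<integral>\<^sup>+r. indicator {0<..<1} r * ((\<integral>\<^sup>+s. ennreal s * F (r * s, s) \<partial>lborel) + (\<integral>\<^sup>+s. ennreal s * F (s, r * s) \<partial>lborel)) \<partial>lborel)"
proof -
  have Fm'[measurable]: "F \<in> borel_measurable (borel \<Otimes>\<^sub>M borel)"
    using Fm by (simp cong: measurable_cong_sets)
  define A where "A p = F p * indicator {p. fst p < snd p} p" for p :: "real \<times> real"
  define B where "B p = F p * indicator {p. snd p \<le> fst p} p" for p :: "real \<times> real"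
  have Am[measurable]: "A \<in> borel_measurable (lborel \<Otimes>\<^sub>M lborel)" unfolding A_def by measurable
  have Bm[measurable]: "B \<in> borel_measurable (lborel \<Otimes>\<^sub>M lborel)" unfolding B_def by measurable
  have "(\<integral>\<^sup>+p. F p \<partial>(lborel \<Otimes>\<^sub>M lborel)) = (\<integral>\<^sup>+p. A p + B p \<partial>(lborel \<Otimes>\<^sub>M lborel))"
    by (intro nn_integral_cong) (auto simp: A_def B_def indicator_def)
  also have "\<dots> = (\<integral>\<^sup>+p. A p \<partial>(lborel \<Otimes>\<^sub>M lborel)) + (\<integral>\<^sup>+p. B p \<partial>(lborel \<Otimes>\<^sub>M lborel))"
    by (rule nn_integral_add) auto
  also have "(\<integral>\<^sup>+p. A p \<partial>(lborel \<Otimes>\<^sub>M lborel)) = (\<integral>\<^sup>+x2. \<integral>\<^sup>+x1. A (x1, x2) \<partial>lborel \<partial>lborel)"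
    by (rule lborel_pair.nn_integral_snd[symmetric]) measurable
  also have "\<dots> = (\<integral>\<^sup>+s. \<integral>\<^sup>+r. indicator {0<..<1} r * (ennreal s * F (r * s, s)) \<partial>lborel \<partial>lborel)"
  proof (rule nn_integral_cong)
    fix s :: real
    show "(\<integral>\<^sup>+x1. A (x1, s) \<partial>lborel) = (\<integral>\<^sup>+r. indicator {0<..<1} r * (ennreal s * F (r * s, s)) \<partial>lborel)"
    proof (cases "s > 0")
      case True
      have "(\<integral>\<^sup>+x1. A (x1, s) \<partial>lborel) = ennreal \<bar>s\<bar> * (\<integral>\<^sup>+r. A (0 + s * r, s) \<partial>lborel)"
        using True by (intro nn_integral_real_affine) auto
      also have "\<dots> = (\<integral>\<^sup>+r. ennreal s * A (s * r, s) \<partial>lborel)"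
        using True by (subst nn_integral_cmult) auto
      also have "\<dots> = (\<integral>\<^sup>+r. indicator {0<..<1} r * (ennreal s * F (r * s, s)) \<partial>lborel)"
      proof (intro nn_integral_cong)
        fix r :: real
        show "ennreal s * A (s * r, s) = indicator {0<..<1} r * (ennreal s * F (r * s, s))"
        proof (cases "r > 0")
          case False
          hence "r * s \<le> 0" using True by (simp add: mult_nonpos_nonneg)
          thus ?thesis using F0[of "r * s" s] by (simp add: A_def mult.commute)
        qed (use True in \<open>auto simp: A_def indicator_def mult.commute\<close>)
      qed
      finally show ?thesis .
    next
      case False
      hence s0: "s \<le> 0" by simp
      have "A (x1, s) = 0" for x1 using F0[of x1 s] s0 by (simp add: A_def)
      moreover have "F (r * s, s) = 0" for r using F0[of "r * s" s] s0 by simp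
      ultimately show ?thesis by simp
    qed
  qed
  also have "\<dots> = (\<integral>\<^sup>+r. \<integral>\<^sup>+s. indicator {0<..<1} r * (ennreal s * F (r * s, s)) \<partial>lborel \<partial>lborel)"
    by (rule lborel_pair.Fubini') measurable
  also have "\<dots> = (\<integral>\<^sup>+r. indicator {0<..<1} r * (\<integral>\<^sup>+s. ennreal s * F (r * s, s) \<partial>lborel) \<partial>lborel)"
    by (intro nn_integral_cong nn_integral_cmult) measurable
  also have "(\<integral>\<^sup>+p. B p \<partial>(lborel \<Otimes>\<^sub>M lborel)) = (\<integral>\<^sup>+x1. \<integral>\<^sup>+x2. B (x1, x2) \<partial>lborel \<partial>lborel)"
    by (rule lborel.nn_integral_fst[symmetric]) measurable
  also have "\<dots> = (\<integral>\<^sup>+s. \<integral>\<^sup>+r. indicator {0<..<1} r * (ennreal s * F (s, r * s)) \<partial>lborel \<partial>lborel)"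
  proof (rule nn_integral_cong)
    fix s :: real
    show "(\<integral>\<^sup>+x2. B (s, x2) \<partial>lborel) = (\<integral>\<^sup>+r. indicator {0<..<1} r * (ennreal s * F (s, r * s)) \<partial>lborel)"
    proof (cases "s > 0")
      case True
      have "(\<integral>\<^sup>+x2. B (s, x2) \<partial>lborel) = ennreal \<bar>s\<bar> * (\<integral>\<^sup>+r. B (s, 0 + s * r) \<partial>lborel)"
        using True by (intro nn_integral_real_affine) auto
      also have "\<dots> = (\<integral>\<^sup>+r. ennreal s * B (s, s * r) \<partial>lborel)"
        using True by (subst nn_integral_cmult) auto
      also have "\<dots> = (\<integral>\<^sup>+r. indicator {0<..<1} r * (ennreal s * F (s, r * s)) \<partial>lborel)"
      proof (intro nn_integral_cong_AE eventually_mono[OF AE_lborel_singleton[of 1]])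
        fix r :: real assume r1: "r \<noteq> 1"
        show "ennreal s * B (s, s * r) = indicator {0<..<1} r * (ennreal s * F (s, r * s))"
        proof (cases "r > 0")
          case False
          hence "r * s \<le> 0" using True by (simp add: mult_nonpos_nonneg)
          thus ?thesis using F0[of s "r * s"] by (simp add: B_def mult.commute)
        next
          case rpos: True
          have "(s * r \<le> s) = (r < 1)" using True r1 by (auto simp: mult_le_cancel_left1)
          thus ?thesis using rpos by (auto simp: B_def indicator_def mult.commute)
        qed
      qed
      finally show ?thesis .
    next
      case False
      hence s0: "s \<le> 0" by simp
      have "B (s, x2) = 0" for x2 using F0[of s x2] s0 by (simp add: B_def)
      moreover have "F (s, r * s) = 0" for r using F0[of s "r * s"] s0 by simp
      ultimately show ?thesis by simp
    qed
  qed
  also have "\<dots> = (\<integral>\<^sup>+r. \<integral>\<^sup>+s. indicator {0<..<1} r * (ennreal s * F (s, r * s)) \<partial>lborel \<partial>lborel)"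
    by (rule lborel_pair.Fubini') measurable
  also have "\<dots> = (\<integral>\<^sup>+r. indicator {0<..<1} r * (\<integral>\<^sup>+s. ennreal s * F (s, r * s) \<partial>lborel) \<partial>lborel)"
    by (intro nn_integral_cong nn_integral_cmult) measurable
  also have "(\<integral>\<^sup>+r. indicator {0<..<1} r * (\<integral>\<^sup>+s. ennreal s * F (r * s, s) \<partial>lborel) \<partial>lborel)
      + (\<integral>\<^sup>+r. indicator {0<..<1} r * (\<integral>\<^sup>+s. ennreal s * F (s, r * s) \<partial>lborel) \<partial>lborel)
      = (\<integral>\<^sup>+r. indicator {0<..<1} r * (\<integral>\<^sup>+s. ennreal s * F (r * s, s) \<partial>lborel)
           + indicator {0<..<1} r * (\<integral>\<^sup>+s. ennreal s * F (s, r * s) \<partial>lborel) \<partial>lborel)"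
    by (rule nn_integral_add[symmetric]) measurable
  finally show ?thesis by (simp add: distrib_left)
qed

lemma pair_kernel:
  assumes u: "u > 0" and v: "v > 0" and s: "s > 0"
  shows "hk a (u * s) * hk a (v * s) * s = (u * v) powr (a - 1) * (u + v) powr (1 - 2 * a) * hk (2 * a) ((u + v) * s)"
proof -
  have e1: "s powr (a - 1) * s powr (a - 1) * s = s powr (2 * a - 1)"
  proof -
    have "s powr (2 * a - 1) = s powr ((a - 1) + (a - 1) + 1)" by (simp add: algebra_simps)
    also have "\<dots> = s powr (a - 1) * s powr (a - 1) * s powr 1" by (simp only: powr_add)
    also have "s powr 1 = s" using s by simp
    finally show ?thesis by simp
  qed
  have e2: "(u + v) powr (1 - 2 * a) * (u + v) powr (2 * a - 1) = 1"
    using u v by (simp add: powr_add[symmetric])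
  have e3: "exp (- (u * s)) * exp (- (v * s)) = exp (- ((u + v) * s))"
    by (simp add: exp_add[symmetric] algebra_simps)
  have "hk a (u * s) * hk a (v * s) * s
      = (u powr (a - 1) * v powr (a - 1)) * (s powr (a - 1) * s powr (a - 1) * s) * (exp (- (u * s)) * exp (- (v * s)))"
    using u v s by (simp add: hk_def powr_mult mult_ac)
  also have "\<dots> = (u powr (a - 1) * v powr (a - 1)) * s powr (2 * a - 1) * exp (- ((u + v) * s))"
    unfolding e1 e3 ..
  also have "\<dots> = (u powr (a - 1) * v powr (a - 1)) * ((u + v) powr (1 - 2 * a) * (u + v) powr (2 * a - 1)) * s powr (2 * a - 1) * exp (- ((u + v) * s))"
    unfolding e2 by simp
  also have "\<dots> = (u * v) powr (a - 1) * (u + v) powr (1 - 2 * a) * hk (2 * a) ((u + v) * s)"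
    using u v s by (simp add: hk_def powr_mult mult_ac)
  finally show ?thesis .
qed

lemma Vb_nonneg: assumes b: "b > 0" shows "Vb b \<ge> 0"
proof -
  have "0 \<le> (\<integral>y. hk b y * (ln y - Digamma b)\<^sup>2 \<partial>lborel)"
    by (intro integral_nonneg_AE AE_I2) (simp add: hk_nonneg)
  also have "\<dots> = Gamma b * Vb b" by (simp add: hk_q_integral[OF b])
  finally show ?thesis using Gamma_real_pos[OF b] by (simp add: zero_le_mult_iff)
qed

lemma inner_rho:
  assumes a: "a > 0" and u: "u > 0" and v: "v > 0" and th: "th > 0" and th': "th' > 0"
  shows "(\<integral>\<^sup>+s. ennreal s * ennreal ((ln s - w)\<^sup>2 * (hk a (u * s) / (Gamma a * th)) * (hk a (v * s) / (Gamma a * th'))) \<partial>lborel)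
    = ennreal ((u * v) powr (a - 1) * (u + v) powr (- 2 * a) * Gamma (2 * a) / ((Gamma a)\<^sup>2 * th * th')
        * ((Digamma (2 * a) - ln (u + v) - w)\<^sup>2 + Vb (2 * a)))"
proof -
  define K where "K = (u * v) powr (a - 1) * (u + v) powr (1 - 2 * a) / ((Gamma a)\<^sup>2 * th * th')"
  have K0: "K \<ge> 0" unfolding K_def using th th' by simp
  have "(\<integral>\<^sup>+s. ennreal s * ennreal ((ln s - w)\<^sup>2 * (hk a (u * s) / (Gamma a * th)) * (hk a (v * s) / (Gamma a * th'))) \<partial>lborel)
      = (\<integral>\<^sup>+s. ennreal K * ennreal (hk (2 * a) ((u + v) * s) * (ln s - w)\<^sup>2) \<partial>lborel)"
  proof (rule nn_integral_cong)
    fix s :: real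
    show "ennreal s * ennreal ((ln s - w)\<^sup>2 * (hk a (u * s) / (Gamma a * th)) * (hk a (v * s) / (Gamma a * th')))
        = ennreal K * ennreal (hk (2 * a) ((u + v) * s) * (ln s - w)\<^sup>2)"
    proof (cases "s > 0")
      case True
      have "s * ((ln s - w)\<^sup>2 * (hk a (u * s) / (Gamma a * th)) * (hk a (v * s) / (Gamma a * th')))
          = (ln s - w)\<^sup>2 * (hk a (u * s) * hk a (v * s) * s) / ((Gamma a)\<^sup>2 * th * th')"
        by (simp add: power2_eq_square field_simps)
      also have "\<dots> = K * (hk (2 * a) ((u + v) * s) * (ln s - w)\<^sup>2)"
        unfolding pair_kernel[OF u v True] K_def by (simp add: field_simps)
      finally have eq: "s * ((ln s - w)\<^sup>2 * (hk a (u * s) / (Gamma a * th)) * (hk a (v * s) / (Gamma a * th')))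
          = K * (hk (2 * a) ((u + v) * s) * (ln s - w)\<^sup>2)" .
      have n: "0 \<le> (ln s - w)\<^sup>2 * (hk a (u * s) / (Gamma a * th)) * (hk a (v * s) / (Gamma a * th'))"
        using th th' a by (simp add: hk_nonneg)
      have n2: "0 \<le> hk (2 * a) ((u + v) * s) * (ln s - w)\<^sup>2" by (simp add: hk_nonneg)
      show ?thesis using True n n2 K0 eq by (simp add: ennreal_mult'[symmetric])
    next
      case False
      hence "(u + v) * s \<le> 0" using u v by (simp add: mult_nonneg_nonpos)
      thus ?thesis using False by (simp add: hk_def ennreal_eq_0_iff)
    qed
  qed
  also have "\<dots> = ennreal K * ennreal (Gamma (2 * a) * ((Digamma (2 * a) - ln (u + v) - w)\<^sup>2 + Vb (2 * a)) / (u + v))"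
    using a u v by (subst nn_integral_cmult) (auto simp: KG)
  also have "\<dots> = ennreal (K * (Gamma (2 * a) * ((Digamma (2 * a) - ln (u + v) - w)\<^sup>2 + Vb (2 * a)) / (u + v)))"
    using K0 a u v Vb_nonneg[of "2 * a"] by (simp add: ennreal_mult'[symmetric])
  also have "K * (Gamma (2 * a) * ((Digamma (2 * a) - ln (u + v) - w)\<^sup>2 + Vb (2 * a)) / (u + v))
      = (u * v) powr (a - 1) * (u + v) powr (- 2 * a) * Gamma (2 * a) / ((Gamma a)\<^sup>2 * th * th')
        * ((Digamma (2 * a) - ln (u + v) - w)\<^sup>2 + Vb (2 * a))"
  proof -
    have "(u + v) powr (- 2 * a) = (u + v) powr ((1 - 2 * a) - 1)" by simp
    also have "\<dots> = (u + v) powr (1 - 2 * a) / (u + v) powr 1" by (rule powr_diff)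
    also have "(u + v) powr 1 = u + v" using u v by simp
    finally have e: "(u + v) powr (- 2 * a) = (u + v) powr (1 - 2 * a) / (u + v)" by simp
    have nz: "u + v \<noteq> 0" using u v by simp
    show ?thesis unfolding K_def e using nz by (simp add: field_simps)
  qed
  finally show ?thesis .
qed

definition P1 :: "real \<Rightarrow> real \<Rightarrow> real \<Rightarrow> real \<Rightarrow> real" where
  "P1 a th1 th2 r = (r / th1 * (1 / th2)) powr (a - 1) * (r / th1 + 1 / th2) powr (- 2 * a) * Gamma (2 * a) / ((Gamma a)\<^sup>2 * th1 * th2)"
definition P2 :: "real \<Rightarrow> real \<Rightarrow> real \<Rightarrow> real \<Rightarrow> real" where
  "P2 a th1 th2 r = (1 / th1 * (r / th2)) powr (a - 1) * (1 / th1 + r / th2) powr (- 2 * a) * Gamma (2 * a) / ((Gamma a)\<^sup>2 * th1 * th2)"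
definition M1 :: "real \<Rightarrow> real \<Rightarrow> real \<Rightarrow> real \<Rightarrow> real" where
  "M1 a th1 th2 r = Digamma (2 * a) - ln (r / th1 + 1 / th2) - ln th2"
definition M2 :: "real \<Rightarrow> real \<Rightarrow> real \<Rightarrow> real \<Rightarrow> real" where
  "M2 a th1 th2 r = Digamma (2 * a) - ln (1 / th1 + r / th2) - ln th1"
definition Qr :: "real \<Rightarrow> real \<Rightarrow> real \<Rightarrow> real \<Rightarrow> real \<Rightarrow> real" where
  "Qr a th1 th2 r t = P1 a th1 th2 r * ((M1 a th1 th2 r - t)\<^sup>2 + Vb (2 * a)) + P2 a th1 th2 r * ((M2 a th1 th2 r - t)\<^sup>2 + Vb (2 * a))"

lemma P_nonneg: assumes a: "a > 0" and th1: "th1 > 0" and th2: "th2 > 0"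
  shows "P1 a th1 th2 r \<ge> 0 \<and> P2 a th1 th2 r \<ge> 0"
proof -
  have g: "Gamma (2 * a) > 0" using a by simp
  show ?thesis unfolding P1_def P2_def using g th1 th2 by (auto intro!: mult_nonneg_nonneg divide_nonneg_nonneg)
qed

lemma Qr_nonneg: "a > 0 \<Longrightarrow> th1 > 0 \<Longrightarrow> th2 > 0 \<Longrightarrow> Qr a th1 th2 r t \<ge> 0"
  unfolding Qr_def using P_nonneg[of a th1 th2 r] Vb_nonneg[of "2 * a"] by simp

lemma HS_meas[measurable]: "(\<lambda>p. HS th1 th2 (fst p) (snd p)) \<in> borel_measurable (lborel \<Otimes>\<^sub>M lborel)"
  unfolding HS_def by measurable

lemma risk_rho:
  assumes a: "a > 0" and th1: "th1 > 0" and th2: "th2 > 0"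
    and dm[measurable]: "(\<lambda>p. d (fst p) (snd p)) \<in> borel_measurable (lborel \<Otimes>\<^sub>M lborel)"
    and dv: "\<And>r s. 0 < r \<Longrightarrow> r < 1 \<Longrightarrow> 0 < s \<Longrightarrow> d (r * s) s = ln s - \<phi> r \<and> d s (r * s) = ln s - \<phi> r"
  shows "risk a th1 th2 d = (\<integral>\<^sup>+r. indicator {0<..<1} r * ennreal (Qr a th1 th2 r (\<phi> r)) \<partial>lborel)"
proof -
  define F where "F p = ennreal ((d (fst p) (snd p) - HS th1 th2 (fst p) (snd p))\<^sup>2 * gdens a th1 (fst p) * gdens a th2 (snd p))" for p
  have Fm: "F \<in> borel_measurable (lborel \<Otimes>\<^sub>M lborel)" unfolding F_def by measurable
  have F0: "F (x1, x2) = 0" if "x1 \<le> 0 \<or> x2 \<le> 0" for x1 x2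
    using that by (auto simp: F_def gdens_def)
  have "risk a th1 th2 d = (\<integral>\<^sup>+p. F p \<partial>(lborel \<Otimes>\<^sub>M lborel))" unfolding risk_def F_def ..
  also have "\<dots> = (\<integral>\<^sup>+r. indicator {0<..<1} r * ((\<integral>\<^sup>+s. ennreal s * F (r * s, s) \<partial>lborel) + (\<integral>\<^sup>+s. ennreal s * F (s, r * s) \<partial>lborel)) \<partial>lborel)"
    by (rule DEC[OF Fm F0]) auto
  also have "\<dots> = (\<integral>\<^sup>+r. indicator {0<..<1} r * ennreal (Qr a th1 th2 r (\<phi> r)) \<partial>lborel)"
  proof (rule nn_integral_cong)
    fix r :: real
    show "indicator {0<..<1} r * ((\<integral>\<^sup>+s. ennreal s * F (r * s, s) \<partial>lborel) + (\<integral>\<^sup>+s. ennreal s * F (s, r * s) \<partial>lborel))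
        = indicator {0<..<1} r * ennreal (Qr a th1 th2 r (\<phi> r))"
    proof (cases "r \<in> {0<..<1}")
      case True
      hence r0: "r > 0" and r1: "r < 1" by auto
      have I1: "(\<integral>\<^sup>+s. ennreal s * F (r * s, s) \<partial>lborel)
          = (\<integral>\<^sup>+s. ennreal s * ennreal ((ln s - (\<phi> r + ln th2))\<^sup>2 * (hk a (r / th1 * s) / (Gamma a * th1)) * (hk a (1 / th2 * s) / (Gamma a * th2))) \<partial>lborel)"
      proof (rule nn_integral_cong)
        fix s :: real
        show "ennreal s * F (r * s, s) = ennreal s * ennreal ((ln s - (\<phi> r + ln th2))\<^sup>2 * (hk a (r / th1 * s) / (Gamma a * th1)) * (hk a (1 / th2 * s) / (Gamma a * th2)))"
        proof (cases "s > 0")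
          case True
          have "r * s < s" using r1 True by simp
          hence "HS th1 th2 (r * s) s = ln th2" by (simp add: HS_def)
          moreover have "d (r * s) s = ln s - \<phi> r" using dv[OF r0 r1 True] by simp
          moreover have "gdens a th1 (r * s) = hk a (r / th1 * s) / (Gamma a * th1)" using th1 by (simp add: gdens_hk)
          moreover have "gdens a th2 s = hk a (1 / th2 * s) / (Gamma a * th2)" using th2 by (simp add: gdens_hk)
          ultimately show ?thesis by (simp add: F_def diff_diff_eq)
        next
          case False
          hence "ennreal s = 0" by (simp add: ennreal_neg)
          thus ?thesis by simp
        qed
      qed
      have I2: "(\<integral>\<^sup>+s. ennreal s * F (s, r * s) \<partial>lborel)
          = (\<integral>\<^sup>+s. ennreal s * ennreal ((ln s - (\<phi> r + ln th1))\<^sup>2 * (hk a (1 / th1 * s) / (Gamma a * th1)) * (hk a (r / th2 * s) / (Gamma a * th2))) \<partial>lborel)"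
      proof (rule nn_integral_cong)
        fix s :: real
        show "ennreal s * F (s, r * s) = ennreal s * ennreal ((ln s - (\<phi> r + ln th1))\<^sup>2 * (hk a (1 / th1 * s) / (Gamma a * th1)) * (hk a (r / th2 * s) / (Gamma a * th2)))"
        proof (cases "s > 0")
          case True
          have "r * s \<le> s" using r1 True by simp
          hence "HS th1 th2 s (r * s) = ln th1" by (simp add: HS_def)
          moreover have "d s (r * s) = ln s - \<phi> r" using dv[OF r0 r1 True] by simp
          moreover have "gdens a th1 s = hk a (1 / th1 * s) / (Gamma a * th1)" using th1 by (simp add: gdens_hk)
          moreover have "gdens a th2 (r * s) = hk a (r / th2 * s) / (Gamma a * th2)" using th2 by (simp add: gdens_hk)
          ultimately show ?thesis by (simp add: F_def diff_diff_eq)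
        next
          case False
          hence "ennreal s = 0" by (simp add: ennreal_neg)
          thus ?thesis by simp
        qed
      qed
      have J1: "(\<integral>\<^sup>+s. ennreal s * F (r * s, s) \<partial>lborel) = ennreal (P1 a th1 th2 r * ((M1 a th1 th2 r - \<phi> r)\<^sup>2 + Vb (2 * a)))"
      proof -
        have R: "(\<integral>\<^sup>+s. ennreal s * ennreal ((ln s - (\<phi> r + ln th2))\<^sup>2 * (hk a (r / th1 * s) / (Gamma a * th1)) * (hk a (1 / th2 * s) / (Gamma a * th2))) \<partial>lborel)
          = ennreal ((r / th1 * (1 / th2)) powr (a - 1) * (r / th1 + 1 / th2) powr (- 2 * a) * Gamma (2 * a) / ((Gamma a)\<^sup>2 * th1 * th2)
             * ((Digamma (2 * a) - ln (r / th1 + 1 / th2) - (\<phi> r + ln th2))\<^sup>2 + Vb (2 * a)))"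
          by (rule inner_rho[OF a]) (use r0 th1 th2 in simp_all)
        have e: "Digamma (2 * a) - ln (r / th1 + 1 / th2) - (\<phi> r + ln th2) = M1 a th1 th2 r - \<phi> r"
          unfolding M1_def by simp
        show ?thesis unfolding I1 R e P1_def ..
      qed
      have J2: "(\<integral>\<^sup>+s. ennreal s * F (s, r * s) \<partial>lborel) = ennreal (P2 a th1 th2 r * ((M2 a th1 th2 r - \<phi> r)\<^sup>2 + Vb (2 * a)))"
      proof -
        have R: "(\<integral>\<^sup>+s. ennreal s * ennreal ((ln s - (\<phi> r + ln th1))\<^sup>2 * (hk a (1 / th1 * s) / (Gamma a * th1)) * (hk a (r / th2 * s) / (Gamma a * th2))) \<partial>lborel)
          = ennreal ((1 / th1 * (r / th2)) powr (a - 1) * (1 / th1 + r / th2) powr (- 2 * a) * Gamma (2 * a) / ((Gamma a)\<^sup>2 * th1 * th2)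
             * ((Digamma (2 * a) - ln (1 / th1 + r / th2) - (\<phi> r + ln th1))\<^sup>2 + Vb (2 * a)))"
          by (rule inner_rho[OF a]) (use r0 th1 th2 in simp_all)
        have e: "Digamma (2 * a) - ln (1 / th1 + r / th2) - (\<phi> r + ln th1) = M2 a th1 th2 r - \<phi> r"
          unfolding M2_def by simp
        show ?thesis unfolding I2 R e P2_def ..
      qed
      have n1: "P1 a th1 th2 r * ((M1 a th1 th2 r - \<phi> r)\<^sup>2 + Vb (2 * a)) \<ge> 0"
        using P_nonneg[OF a th1 th2, of r] Vb_nonneg[of "2 * a"] a by simp
      have n2: "P2 a th1 th2 r * ((M2 a th1 th2 r - \<phi> r)\<^sup>2 + Vb (2 * a)) \<ge> 0"
        using P_nonneg[OF a th1 th2, of r] Vb_nonneg[of "2 * a"] a by simp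
      have sum: "ennreal (P1 a th1 th2 r * ((M1 a th1 th2 r - \<phi> r)\<^sup>2 + Vb (2 * a))) + ennreal (P2 a th1 th2 r * ((M2 a th1 th2 r - \<phi> r)\<^sup>2 + Vb (2 * a)))
          = ennreal (Qr a th1 th2 r (\<phi> r))"
        unfolding Qr_def by (rule ennreal_plus[symmetric, OF n1 n2])
      show ?thesis unfolding J1 J2 sum ..
    next
      case False
      hence "indicator {0<..<1} r = (0::ennreal)" by (simp add: indicator_def)
      thus ?thesis by (simp only: mult_zero_left)
    qed
  qed
  finally show ?thesis .
qed

lemma cheb:
  fixes P1 P2 x y l :: real
  assumes "P1 \<ge> 0" "P2 \<ge> 0" "(P1 - P2) * (x - y) \<ge> 0" "x + y \<ge> 2 * l"
  shows "P1 * x + P2 * y \<ge> (P1 + P2) * l"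
proof -
  have e: "P1 * x + P2 * y = (P1 + P2) * ((x + y) / 2) + (P1 - P2) * (x - y) / 2" by (simp add: field_simps)
  have "(P1 + P2) * l \<le> (P1 + P2) * ((x + y) / 2)" using assms by (intro mult_left_mono) auto
  thus ?thesis unfolding e using assms(3) by linarith
qed

lemma P_pos: assumes a: "a > 0" and th1: "th1 > 0" and th2: "th2 > 0" and r: "r > 0"
  shows "P1 a th1 th2 r > 0 \<and> P2 a th1 th2 r > 0"
proof -
  have g: "Gamma (2 * a) > 0" "Gamma a > 0" using a by simp_all
  have k: "r / th1 + 1 / th2 > 0" "1 / th1 + r / th2 > 0" using th1 th2 r by (auto intro!: add_pos_pos divide_pos_pos)
  show ?thesis unfolding P1_def P2_def using g th1 th2 r k by (auto intro!: mult_pos_pos divide_pos_pos)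
qed

lemma Mbound:
  assumes a: "a > 0" and th1: "th1 > 0" and th2: "th2 > 0" and r0: "r > 0" and r1: "r < 1"
  shows "P1 a th1 th2 r * M1 a th1 th2 r + P2 a th1 th2 r * M2 a th1 th2 r
      \<le> (P1 a th1 th2 r + P2 a th1 th2 r) * (Digamma (2 * a) - ln (1 + r))"
proof -
  define k1 where "k1 = r / th1 + 1 / th2"
  define k2 where "k2 = 1 / th1 + r / th2"
  define C where "C = (r / th1 * (1 / th2)) powr (a - 1) * Gamma (2 * a) / ((Gamma a)\<^sup>2 * th1 * th2)"
  have k1p: "k1 > 0" and k2p: "k2 > 0" using th1 th2 r0 unfolding k1_def k2_def by (auto intro!: add_pos_pos divide_pos_pos)
  have C0: "C \<ge> 0" unfolding C_def using a th1 th2 by (simp add: less_imp_le)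
  have eP1: "P1 a th1 th2 r = C * k1 powr (- 2 * a)" unfolding P1_def C_def k1_def by simp
  have eP2: "P2 a th1 th2 r = C * k2 powr (- 2 * a)"
  proof -
    have "1 / th1 * (r / th2) = r / th1 * (1 / th2)" by simp
    thus ?thesis unfolding P2_def C_def k2_def by simp
  qed
  define x where "x = ln (k1 * th2)"
  define y where "y = ln (k2 * th1)"
  have eM1: "M1 a th1 th2 r = Digamma (2 * a) - x" unfolding M1_def x_def k1_def[symmetric]
    using k1p th2 by (simp add: ln_mult)
  have eM2: "M2 a th1 th2 r = Digamma (2 * a) - y" unfolding M2_def y_def k2_def[symmetric]
    using k2p th1 by (simp add: ln_mult)
  define P where "P = P1 a th1 th2 r" 
  define Q where "Q = P2 a th1 th2 r"
  have P0: "P \<ge> 0" and Q0: "Q \<ge> 0" using P_nonneg[OF a th1 th2, of r] by (simp_all add: P_def Q_def)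
  have xy: "x + y \<ge> 2 * ln (1 + r)"
  proof -
    have prod: "k1 * th2 * (k2 * th1) = 1 + r * (th1 / th2 + th2 / th1) + r\<^sup>2"
      unfolding k1_def k2_def using th1 th2 by (simp add: field_simps power2_eq_square)
    have q: "th1 / th2 + th2 / th1 \<ge> 2"
    proof -
      have "(th1 - th2)\<^sup>2 \<ge> 0" by simp
      hence "th1\<^sup>2 + th2\<^sup>2 \<ge> 2 * th1 * th2" by (simp add: power2_eq_square algebra_simps)
      thus ?thesis using th1 th2 by (simp add: field_simps power2_eq_square)
    qed
    have "r * 2 \<le> r * (th1 / th2 + th2 / th1)" using q r0 by (intro mult_left_mono) auto
    hence "(1 + r)\<^sup>2 \<le> k1 * th2 * (k2 * th1)" unfolding prod
      by (simp add: power2_eq_square algebra_simps)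
    hence "ln ((1 + r)\<^sup>2) \<le> ln (k1 * th2 * (k2 * th1))" using r0 k1p k2p th1 th2 by (subst ln_le_cancel_iff) auto
    also have "\<dots> = x + y" unfolding x_def y_def using k1p k2p th1 th2 by (simp add: ln_mult)
    also have "ln ((1 + r)\<^sup>2) = 2 * ln (1 + r)" using r0 by (simp add: ln_realpow)
    finally show ?thesis by simp
  qed
  have cross: "(P - Q) * (x - y) \<ge> 0"
  proof (cases "th1 \<le> th2")
    case True
    have "k1 \<le> k2"
    proof -
      have "k2 - k1 = (1 - r) * (1 / th1 - 1 / th2)" unfolding k1_def k2_def using th1 th2 by (simp add: field_simps)
      moreover have "1 / th1 - 1 / th2 \<ge> 0" using True th1 by (simp add: frac_le)
      ultimately have "k2 - k1 \<ge> 0" using r1 by (simp add: mult_nonneg_nonneg)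
      thus ?thesis by simp
    qed
    hence "k2 powr (- 2 * a) \<le> k1 powr (- 2 * a)" using k1p a by (intro powr_mono2') auto
    hence "Q \<le> P" unfolding P_def Q_def eP1 eP2 using C0 by (intro mult_left_mono)
    moreover have "y \<le> x"
    proof -
      have "k2 * th1 = 1 + r * (th1 / th2)" "k1 * th2 = 1 + r * (th2 / th1)"
        unfolding k1_def k2_def using th1 th2 by (simp_all add: field_simps)
      moreover have "th1 / th2 \<le> th2 / th1" using True th1 th2
        by (simp add: field_simps power2_eq_square) (simp add: mult_mono)
      ultimately have "k2 * th1 \<le> k1 * th2" using r0 mult_left_mono[of "th1 / th2" "th2 / th1" r] by linarith
      thus ?thesis unfolding x_def y_def using k1p k2p th1 th2 by (subst ln_le_cancel_iff) auto
    qed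
    ultimately show ?thesis by (simp add: mult_nonneg_nonneg)
  next
    case False
    have "k2 \<le> k1"
    proof -
      have "k1 - k2 = (1 - r) * (1 / th2 - 1 / th1)" unfolding k1_def k2_def using th1 th2 by (simp add: field_simps)
      moreover have "1 / th2 - 1 / th1 \<ge> 0" using False th2 by (simp add: frac_le)
      ultimately have "k1 - k2 \<ge> 0" using r1 by (simp add: mult_nonneg_nonneg)
      thus ?thesis by simp
    qed
    hence "k1 powr (- 2 * a) \<le> k2 powr (- 2 * a)" using k2p a by (intro powr_mono2') auto
    hence "P \<le> Q" unfolding P_def Q_def eP1 eP2 using C0 by (intro mult_left_mono)
    moreover have "x \<le> y"
    proof -
      have "k2 * th1 = 1 + r * (th1 / th2)" "k1 * th2 = 1 + r * (th2 / th1)"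
        unfolding k1_def k2_def using th1 th2 by (simp_all add: field_simps)
      moreover have "th2 / th1 \<le> th1 / th2" using False th1 th2
        by (simp add: field_simps power2_eq_square) (simp add: mult_mono)
      ultimately have "k1 * th2 \<le> k2 * th1" using r0 mult_left_mono[of "th2 / th1" "th1 / th2" r] by linarith
      thus ?thesis unfolding x_def y_def using k1p k2p th1 th2 by (subst ln_le_cancel_iff) auto
    qed
    ultimately show ?thesis by (simp add: mult_nonneg_nonpos2 mult_nonpos_nonpos)
  qed
  have "P * x + Q * y \<ge> (P + Q) * ln (1 + r)" by (rule cheb[OF P0 Q0 cross xy])
  thus ?thesis unfolding eM1 eM2 P_def[symmetric] Q_def[symmetric] by (simp add: algebra_simps)
qed

lemma Qr_diff:
  "Qr a th1 th2 r c - Qr a th1 th2 r b = (c - b) * ((P1 a th1 th2 r + P2 a th1 th2 r) * (c + b)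
      - 2 * (P1 a th1 th2 r * M1 a th1 th2 r + P2 a th1 th2 r * M2 a th1 th2 r))"
  unfolding Qr_def by (simp add: power2_eq_square algebra_simps)

lemma Qr_shrink:
  assumes a: "a > 0" and th1: "th1 > 0" and th2: "th2 > 0" and r0: "r > 0" and r1: "r < 1"
  shows "Qr a th1 th2 r (min c (Digamma (2 * a) - ln (1 + r))) \<le> Qr a th1 th2 r c"
    and "Digamma (2 * a) - ln (1 + r) < c \<Longrightarrow> Qr a th1 th2 r (min c (Digamma (2 * a) - ln (1 + r))) < Qr a th1 th2 r c"
proof -
  define b where "b = Digamma (2 * a) - ln (1 + r)"
  define S where "S = P1 a th1 th2 r + P2 a th1 th2 r"
  have S0: "S > 0" unfolding S_def using P_pos[OF a th1 th2 r0] by simp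
  have MB: "P1 a th1 th2 r * M1 a th1 th2 r + P2 a th1 th2 r * M2 a th1 th2 r \<le> S * b"
    unfolding S_def b_def by (rule Mbound[OF a th1 th2 r0 r1])
  have key: "Qr a th1 th2 r c - Qr a th1 th2 r b \<ge> S * (c - b)\<^sup>2" if "b \<le> c"
  proof -
    have "S * (c + b) - 2 * (P1 a th1 th2 r * M1 a th1 th2 r + P2 a th1 th2 r * M2 a th1 th2 r) \<ge> S * (c - b)"
      using MB by (simp add: algebra_simps)
    hence "(c - b) * (S * (c - b)) \<le> (c - b) * (S * (c + b) - 2 * (P1 a th1 th2 r * M1 a th1 th2 r + P2 a th1 th2 r * M2 a th1 th2 r))"
      using that by (intro mult_left_mono) auto
    thus ?thesis unfolding Qr_diff S_def[symmetric] by (simp add: power2_eq_square mult_ac)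
  qed
  show "Qr a th1 th2 r (min c (Digamma (2 * a) - ln (1 + r))) \<le> Qr a th1 th2 r c"
  proof (cases "b \<le> c")
    case True
    hence "min c b = b" by simp
    thus ?thesis using key[OF True] S0 unfolding b_def[symmetric]
      by (smt (verit) mult_nonneg_nonneg zero_le_power2)
  qed (simp add: b_def[symmetric])
  assume lt: "Digamma (2 * a) - ln (1 + r) < c"
  hence lt': "b < c" by (simp add: b_def)
  hence "min c b = b" by simp
  moreover have "S * (c - b)\<^sup>2 > 0" using S0 lt' by simp
  ultimately show "Qr a th1 th2 r (min c (Digamma (2 * a) - ln (1 + r))) < Qr a th1 th2 r c"
    using key[of] lt' unfolding b_def[symmetric] by force
qed

lemma delta_meas[measurable]: "(\<lambda>p. delta c (fst p) (snd p)) \<in> borel_measurable (lborel \<Otimes>\<^sub>M lborel)"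
  unfolding delta_def by measurable

lemma deltaS_meas[measurable]: "(\<lambda>p. deltaS a c (fst p) (snd p)) \<in> borel_measurable (lborel \<Otimes>\<^sub>M lborel)"
  unfolding deltaS_def by measurable

lemma risk_delta_rho:
  assumes a: "a > 0" and th1: "th1 > 0" and th2: "th2 > 0"
  shows "risk a th1 th2 (delta c) = (\<integral>\<^sup>+r. indicator {0<..<1} r * ennreal (Qr a th1 th2 r c) \<partial>lborel)"
  by (rule risk_rho[OF a th1 th2 delta_meas, where \<phi>="\<lambda>_. c"]) (auto simp: delta_def max_def)

lemma deltaS_val:
  assumes r0: "0 < r" and r1: "r < 1" and s: "0 < s"
  shows "deltaS a c (r * s) s = ln s - min c (Digamma (2 * a) - ln (1 + r))
    \<and> deltaS a c s (r * s) = ln s - min c (Digamma (2 * a) - ln (1 + r))"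
proof -
  have mm: "min (r * s) s = r * s" "max (r * s) s = s" "min s (r * s) = r * s" "max s (r * s) = s"
    using r1 s by (auto simp: min_def max_def)
  have q: "r * s / s = r" using s by simp
  have e: "r * s + s = s * (1 + r)" "s + r * s = s * (1 + r)" by (simp_all add: algebra_simps)
  have sum: "ln (r * s + s) = ln s + ln (1 + r)" "ln (s + r * s) = ln s + ln (1 + r)"
    unfolding e using r0 s by (simp_all add: ln_mult)
  have cond: "(r < exp (Digamma (2 * a) - c) - 1) = (c < Digamma (2 * a) - ln (1 + r))"
  proof -
    have "(r < exp (Digamma (2 * a) - c) - 1) = (1 + r < exp (Digamma (2 * a) - c))" by auto
    also have "\<dots> = (ln (1 + r) < Digamma (2 * a) - c)" using r0
      by (metis exp_gt_zero ln_exp ln_less_cancel_iff add_pos_pos zero_less_one)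
    finally show ?thesis by auto
  qed
  show ?thesis unfolding deltaS_def mm q sum cond by (auto simp: min_def)
qed

lemma risk_deltaS_rho:
  assumes a: "a > 0" and th1: "th1 > 0" and th2: "th2 > 0"
  shows "risk a th1 th2 (deltaS a c) = (\<integral>\<^sup>+r. indicator {0<..<1} r * ennreal (Qr a th1 th2 r (min c (Digamma (2 * a) - ln (1 + r)))) \<partial>lborel)"
  by (rule risk_rho[OF a th1 th2 deltaS_meas]) (rule deltaS_val)

lemma deltaS_le:
  assumes a: "a > 0" and th1: "th1 > 0" and th2: "th2 > 0"
  shows "risk a th1 th2 (deltaS a c) \<le> risk a th1 th2 (delta c)"
  unfolding risk_deltaS_rho[OF a th1 th2] risk_delta_rho[OF a th1 th2]
  by (intro nn_integral_mono) (auto simp: indicator_def intro!: ennreal_leI Qr_shrink(1)[OF a th1 th2])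

lemma deltaS_lt:
  assumes a: "a > 0" and th1: "th1 > 0" and th2: "th2 > 0" and c: "c > Digamma (2 * a) - ln 2"
  shows "risk a th1 th2 (deltaS a c) < risk a th1 th2 (delta c)"
proof -
  define f where "f r = indicator {0<..<1} r * ennreal (Qr a th1 th2 r (min c (Digamma (2 * a) - ln (1 + r))))" for r :: real
  define g where "g r = indicator {0<..<1} r * ennreal (Qr a th1 th2 r c)" for r :: real
  have fm: "f \<in> borel_measurable lborel" unfolding f_def Qr_def P1_def P2_def M1_def M2_def by measurable
  have gm: "g \<in> borel_measurable lborel" unfolding g_def Qr_def P1_def P2_def M1_def M2_def by measurable
  have le: "f r \<le> g r" for r
    unfolding f_def g_def by (auto simp: indicator_def intro!: ennreal_leI Qr_shrink(1)[OF a th1 th2])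
  have "(\<integral>\<^sup>+r. f r \<partial>lborel) < (\<integral>\<^sup>+r. g r \<partial>lborel)"
  proof (rule nn_integral_less[OF fm gm])
    have "(\<integral>\<^sup>+r. f r \<partial>lborel) \<le> (\<integral>\<^sup>+r. g r \<partial>lborel)" by (intro nn_integral_mono le)
    also have "\<dots> = risk a th1 th2 (delta c)" unfolding g_def risk_delta_rho[OF a th1 th2] ..
    also have "\<dots> < \<infinity>" by (rule risk_delta_fin[OF a th1 th2])
    finally show "(\<integral>\<^sup>+r. f r \<partial>lborel) \<noteq> \<infinity>" by simp
    show "AE x in lborel. f x \<le> g x" by (intro AE_I2 le)
    show "\<not> (AE x in lborel. g x \<le> f x)"
    proof
      assume "AE x in lborel. g x \<le> f x"
      define r0 where "r0 = max 0 (exp (Digamma (2 * a) - c) - 1)"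
      have "Digamma (2 * a) - c < ln 2" using c by simp
      hence "exp (Digamma (2 * a) - c) < exp (ln 2)" by (simp only: exp_less_cancel_iff)
      hence r01: "r0 < 1" unfolding r0_def by simp
      from AE_interval_ex[OF \<open>AE x in lborel. g x \<le> f x\<close> r01] obtain r
        where r: "r \<in> {r0<..<1}" "g r \<le> f r" by auto
      have rp: "r > 0" "r < 1" using r(1) by (auto simp: r0_def)
      have "exp (Digamma (2 * a) - c) < 1 + r" using r(1) by (auto simp: r0_def)
      hence "ln (exp (Digamma (2 * a) - c)) < ln (1 + r)" using rp by (subst ln_less_cancel_iff) auto
      hence blt: "Digamma (2 * a) - ln (1 + r) < c" by simp
      have "Qr a th1 th2 r (min c (Digamma (2 * a) - ln (1 + r))) < Qr a th1 th2 r c"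
        by (rule Qr_shrink(2)[OF a th1 th2 rp blt])
      hence "f r < g r" unfolding f_def g_def using rp Qr_nonneg[OF a th1 th2]
        by (simp add: indicator_def ennreal_less_iff)
      thus False using r(2) by simp
    qed
  qed
  thus ?thesis unfolding risk_deltaS_rho[OF a th1 th2] risk_delta_rho[OF a th1 th2] f_def g_def .
qed

theorem domA:
  assumes a: "a > 0" and c: "c > Digamma (2 * a) - ln 2"
  shows "dominates a (deltaS a c) (delta c)"
  unfolding dominates_def
proof (intro conjI allI impI)
  fix th1 th2 :: real assume "th1 > 0" "th2 > 0"
  thus "risk a th1 th2 (deltaS a c) \<le> risk a th1 th2 (delta c)" by (rule deltaS_le[OF a])
next
  show "\<exists>th1>0. \<exists>th2>0. risk a th1 th2 (deltaS a c) < risk a th1 th2 (delta c)"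
    using deltaS_lt[OF a _ _ c, of 1 1] by (intro exI[of _ "1::real"] conjI) auto
qed

lemma nn_prod:
  fixes f g :: "real \<Rightarrow> real"
  assumes [measurable]: "f \<in> borel_measurable borel" "g \<in> borel_measurable borel"
    and f0: "\<And>x. f x \<ge> 0" and g0: "\<And>x. g x \<ge> 0"
  shows "(\<integral>\<^sup>+p. ennreal (f (fst p) * g (snd p)) \<partial>(lborel \<Otimes>\<^sub>M lborel))
     = (\<integral>\<^sup>+x. ennreal (f x) \<partial>lborel) * (\<integral>\<^sup>+y. ennreal (g y) \<partial>lborel)"
proof -
  have "(\<integral>\<^sup>+p. ennreal (f (fst p) * g (snd p)) \<partial>(lborel \<Otimes>\<^sub>M lborel))
      = (\<integral>\<^sup>+p. ennreal (f (fst p)) * ennreal (g (snd p)) \<partial>(lborel \<Otimes>\<^sub>M lborel))"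
    by (intro nn_integral_cong) (simp add: ennreal_mult'' f0 g0)
  also have "\<dots> = (\<integral>\<^sup>+x. \<integral>\<^sup>+y. ennreal (f x) * ennreal (g y) \<partial>lborel \<partial>lborel)"
    using lborel.nn_integral_fst[of "\<lambda>p. ennreal (f (fst p)) * ennreal (g (snd p))" lborel] by simp
  also have "\<dots> = (\<integral>\<^sup>+x. ennreal (f x) * (\<integral>\<^sup>+y. ennreal (g y) \<partial>lborel) \<partial>lborel)"
    by (intro nn_integral_cong nn_integral_cmult) measurable
  also have "\<dots> = (\<integral>\<^sup>+x. ennreal (f x) \<partial>lborel) * (\<integral>\<^sup>+y. ennreal (g y) \<partial>lborel)"
    by (rule nn_integral_multc) measurable
  finally show ?thesis .
qed

definition wf :: "real \<Rightarrow> real \<Rightarrow> real \<Rightarrow> real \<times> real \<Rightarrow> real" where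
  "wf a th1 th2 p = gdens a th1 (fst p) * gdens a th2 (snd p)"
definition Lf :: "real \<Rightarrow> real \<Rightarrow> real \<times> real \<Rightarrow> real" where
  "Lf th1 th2 p = ln (max (fst p) (snd p)) - HS th1 th2 (fst p) (snd p)"

lemma wf_meas[measurable]: "wf a th1 th2 \<in> borel_measurable (lborel \<Otimes>\<^sub>M lborel)"
  unfolding wf_def by measurable
lemma Lf_meas[measurable]: "Lf th1 th2 \<in> borel_measurable (lborel \<Otimes>\<^sub>M lborel)"
  unfolding Lf_def by measurable

lemma wf_nonneg: "a > 0 \<Longrightarrow> th1 > 0 \<Longrightarrow> th2 > 0 \<Longrightarrow> wf a th1 th2 p \<ge> 0"
  unfolding wf_def by (intro mult_nonneg_nonneg gdens_nonneg)

lemma wf_nn: assumes a: "a > 0" and th1: "th1 > 0" and th2: "th2 > 0"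
  shows "(\<integral>\<^sup>+p. ennreal (wf a th1 th2 p) \<partial>(lborel \<Otimes>\<^sub>M lborel)) = 1"
  unfolding wf_def using gdens_nonneg[OF a th1] gdens_nonneg[OF a th2]
  by (subst nn_prod) (auto simp: gdens_mass[OF a th1] gdens_mass[OF a th2])

lemma wf_int: assumes a: "a > 0" and th1: "th1 > 0" and th2: "th2 > 0"
  shows "integrable (lborel \<Otimes>\<^sub>M lborel) (wf a th1 th2)" and "integral\<^sup>L (lborel \<Otimes>\<^sub>M lborel) (wf a th1 th2) = 1"
proof -
  have h: "has_bochner_integral (lborel \<Otimes>\<^sub>M lborel) (wf a th1 th2) 1"
    by (rule has_bochner_integral_nn_integral) (use wf_nn[OF a th1 th2] wf_nonneg[OF a th1 th2] in auto)
  thus "integrable (lborel \<Otimes>\<^sub>M lborel) (wf a th1 th2)" "integral\<^sup>L (lborel \<Otimes>\<^sub>M lborel) (wf a th1 th2) = 1"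
    by (auto simp: has_bochner_integral_iff)
qed

lemma risk_delta_Lf: "risk a th1 th2 (delta t) = (\<integral>\<^sup>+p. ennreal ((Lf th1 th2 p - t)\<^sup>2 * wf a th1 th2 p) \<partial>(lborel \<Otimes>\<^sub>M lborel))"
  unfolding risk_def Lf_def wf_def delta_def by (intro nn_integral_cong) (simp add: algebra_simps)

lemma L2_int: assumes a: "a > 0" and th1: "th1 > 0" and th2: "th2 > 0"
  shows "integrable (lborel \<Otimes>\<^sub>M lborel) (\<lambda>p. (Lf th1 th2 p)\<^sup>2 * wf a th1 th2 p)"
proof (rule integrableI_nonneg)
  show "AE p in lborel \<Otimes>\<^sub>M lborel. 0 \<le> (Lf th1 th2 p)\<^sup>2 * wf a th1 th2 p"
    using wf_nonneg[OF a th1 th2] by (intro AE_I2) simp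
  have "(\<integral>\<^sup>+p. ennreal ((Lf th1 th2 p)\<^sup>2 * wf a th1 th2 p) \<partial>(lborel \<Otimes>\<^sub>M lborel)) = risk a th1 th2 (delta 0)"
    unfolding risk_delta_Lf by simp
  also have "\<dots> < \<infinity>" by (rule risk_delta_fin[OF a th1 th2])
  finally show "(\<integral>\<^sup>+p. ennreal ((Lf th1 th2 p)\<^sup>2 * wf a th1 th2 p) \<partial>(lborel \<Otimes>\<^sub>M lborel)) < \<infinity>" .
qed measurable

lemma L_int: assumes a: "a > 0" and th1: "th1 > 0" and th2: "th2 > 0"
  shows "integrable (lborel \<Otimes>\<^sub>M lborel) (\<lambda>p. Lf th1 th2 p * wf a th1 th2 p)"
proof (rule Bochner_Integration.integrable_bound)
  show "integrable (lborel \<Otimes>\<^sub>M lborel) (\<lambda>p. (Lf th1 th2 p)\<^sup>2 * wf a th1 th2 p + wf a th1 th2 p)"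
    by (intro Bochner_Integration.integrable_add L2_int wf_int a th1 th2)
  show "AE p in lborel \<Otimes>\<^sub>M lborel. norm (Lf th1 th2 p * wf a th1 th2 p) \<le> norm ((Lf th1 th2 p)\<^sup>2 * wf a th1 th2 p + wf a th1 th2 p)"
  proof (intro AE_I2)
    fix p
    define l where "l = Lf th1 th2 p"
    define w where "w = wf a th1 th2 p"
    have w0: "w \<ge> 0" unfolding w_def by (rule wf_nonneg[OF a th1 th2])
    have "\<bar>l\<bar> \<le> l\<^sup>2 + 1"
    proof (cases "\<bar>l\<bar> \<le> 1")
      case False
      hence "\<bar>l\<bar> * 1 \<le> \<bar>l\<bar> * \<bar>l\<bar>" by (intro mult_left_mono) auto
      thus ?thesis by (simp add: power2_eq_square)
    next
      case True
      have "0 \<le> l\<^sup>2" by simp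
      with True show ?thesis by linarith
    qed
    hence "\<bar>l\<bar> * w \<le> (l\<^sup>2 + 1) * w" using w0 by (intro mult_right_mono) auto
    thus "norm (Lf th1 th2 p * wf a th1 th2 p) \<le> norm ((Lf th1 th2 p)\<^sup>2 * wf a th1 th2 p + wf a th1 th2 p)"
      unfolding l_def[symmetric] w_def[symmetric] using w0 by (simp add: abs_mult algebra_simps)
  qed
qed measurable

lemma risk_quad: assumes a: "a > 0" and th1: "th1 > 0" and th2: "th2 > 0"
  shows "risk a th1 th2 (delta t) = ennreal ((\<integral>p. (Lf th1 th2 p)\<^sup>2 * wf a th1 th2 p \<partial>(lborel \<Otimes>\<^sub>M lborel))
      - 2 * t * (\<integral>p. Lf th1 th2 p * wf a th1 th2 p \<partial>(lborel \<Otimes>\<^sub>M lborel)) + t\<^sup>2)"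
proof -
  have eq: "(\<lambda>p. (Lf th1 th2 p - t)\<^sup>2 * wf a th1 th2 p) = (\<lambda>p. (Lf th1 th2 p)\<^sup>2 * wf a th1 th2 p - (2 * t) * (Lf th1 th2 p * wf a th1 th2 p) + t\<^sup>2 * wf a th1 th2 p)"
    by (auto simp: fun_eq_iff power2_eq_square algebra_simps)
  have i: "integrable (lborel \<Otimes>\<^sub>M lborel) (\<lambda>p. (Lf th1 th2 p)\<^sup>2 * wf a th1 th2 p - (2 * t) * (Lf th1 th2 p * wf a th1 th2 p) + t\<^sup>2 * wf a th1 th2 p)"
    by (intro Bochner_Integration.integrable_add Bochner_Integration.integrable_diff
        Bochner_Integration.integrable_mult_right L2_int L_int wf_int a th1 th2)
  have "risk a th1 th2 (delta t) = ennreal (\<integral>p. (Lf th1 th2 p - t)\<^sup>2 * wf a th1 th2 p \<partial>(lborel \<Otimes>\<^sub>M lborel))"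
    unfolding risk_delta_Lf
    by (rule nn_integral_eq_integral) (use i eq wf_nonneg[OF a th1 th2] in auto)
  also have "(\<integral>p. (Lf th1 th2 p - t)\<^sup>2 * wf a th1 th2 p \<partial>(lborel \<Otimes>\<^sub>M lborel))
     = (\<integral>p. (Lf th1 th2 p)\<^sup>2 * wf a th1 th2 p \<partial>(lborel \<Otimes>\<^sub>M lborel))
      - 2 * t * (\<integral>p. Lf th1 th2 p * wf a th1 th2 p \<partial>(lborel \<Otimes>\<^sub>M lborel)) + t\<^sup>2"
    unfolding eq using wf_int[OF a th1 th2] L2_int[OF a th1 th2] L_int[OF a th1 th2]
    by (simp add: Bochner_Integration.integral_add Bochner_Integration.integral_diff
        Bochner_Integration.integrable_diff Bochner_Integration.integrable_add)
  finally show ?thesis .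
qed

lemma gd_scale: "th > 0 \<Longrightarrow> th * gdens a th (th * z) = gdens a 1 z"
  by (simp add: gdens_hk)

definition Fc :: "real \<Rightarrow> real \<Rightarrow> real" where
  "Fc a y = (\<integral>z. indicator {..y} z * gdens a 1 z \<partial>lborel)"

lemma cdf_scale: assumes th: "th > 0"
  shows "(\<integral>x. indicator {..th * y} x * gdens a th x \<partial>lborel) = Fc a y"
proof -
  have "(\<integral>x. indicator {..th * y} x * gdens a th x \<partial>lborel)
      = \<bar>th\<bar> *\<^sub>R (\<integral>x. indicator {..th * y} (0 + th * x) * gdens a th (0 + th * x) \<partial>lborel)"
    using th by (intro lborel_integral_real_affine) auto
  also have "\<dots> = (\<integral>x. th * (indicator {..th * y} (th * x) * gdens a th (th * x)) \<partial>lborel)"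
    using th by simp
  also have "\<dots> = Fc a y" unfolding Fc_def
  proof (intro Bochner_Integration.integral_cong refl)
    fix x :: real
    have "indicator {..th * y} (th * x) = (indicator {..y} x :: real)" using th by (auto simp: indicator_def)
    thus "th * (indicator {..th * y} (th * x) * gdens a th (th * x)) = indicator {..y} x * gdens a 1 x"
      using gd_scale[OF th, of a x] by (simp add: mult_ac)
  qed
  finally show ?thesis .
qed

lemma cdf_scale_lt: assumes th: "th > 0"
  shows "(\<integral>x. indicator {..<th * y} x * gdens a th x \<partial>lborel) = Fc a y"
proof -
  have "(\<integral>x. indicator {..<th * y} x * gdens a th x \<partial>lborel) = (\<integral>x. indicator {..th * y} x * gdens a th x \<partial>lborel)"
    by (intro integral_cong_AE eventually_mono[OF AE_lborel_singleton[of "th * y"]]) (auto simp: indicator_def)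
  thus ?thesis using cdf_scale[OF th] by simp
qed

lemma ln_subst: assumes th: "th > 0"
  shows "(\<integral>x. ln (x / th) * gdens a th x * Fc a (x / th) \<partial>lborel) = (\<integral>y. ln y * gdens a 1 y * Fc a y \<partial>lborel)"
proof -
  have "(\<integral>x. ln (x / th) * gdens a th x * Fc a (x / th) \<partial>lborel)
      = \<bar>th\<bar> *\<^sub>R (\<integral>x. ln ((0 + th * x) / th) * gdens a th (0 + th * x) * Fc a ((0 + th * x) / th) \<partial>lborel)"
    using th by (intro lborel_integral_real_affine) auto
  also have "\<dots> = (\<integral>x. th * (ln ((th * x) / th) * gdens a th (th * x) * Fc a ((th * x) / th)) \<partial>lborel)"
    using th by simp
  also have "\<dots> = (\<integral>y. ln y * gdens a 1 y * Fc a y \<partial>lborel)"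
  proof (intro Bochner_Integration.integral_cong refl)
    fix x :: real
    have "th * x / th = x" using th by simp
    thus "th * (ln ((th * x) / th) * gdens a th (th * x) * Fc a ((th * x) / th)) = ln x * gdens a 1 x * Fc a x"
      using gd_scale[OF th, of a x] by (simp add: mult_ac)
  qed
  finally show ?thesis .
qed

lemma lnabs_fin: assumes a: "a > 0" and th: "th > 0"
  shows "(\<integral>\<^sup>+x. ennreal (\<bar>ln (x / th)\<bar> * gdens a th x) \<partial>lborel) < \<infinity>"
proof -
  have "(\<integral>\<^sup>+x. ennreal (\<bar>ln (x / th)\<bar> * gdens a th x) \<partial>lborel) = (\<integral>\<^sup>+x. ennreal \<bar>ln (x / th)\<bar> * ennreal (gdens a th x) \<partial>lborel)"
    using gdens_nonneg[OF a th] by (intro nn_integral_cong) (simp add: ennreal_mult)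
  also have "\<dots> = (\<integral>\<^sup>+y. ennreal \<bar>ln (th * y / th)\<bar> * ennreal (hk a y / Gamma a) \<partial>lborel)"
    by (rule gd_subst[OF th]) measurable
  also have "\<dots> = (\<integral>\<^sup>+y. ennreal (1 / Gamma a) * ennreal (norm (hk a y * ln y)) \<partial>lborel)"
  proof (intro nn_integral_cong)
    fix y :: real
    have g: "Gamma a > 0" using a by simp
    have e: "th * y / th = y" using th by simp
    have "ennreal \<bar>ln (th * y / th)\<bar> * ennreal (hk a y / Gamma a) = ennreal (\<bar>ln y\<bar> * (hk a y / Gamma a))"
      unfolding e by (rule ennreal_mult[symmetric]) (use g hk_nonneg[of a y] in auto)
    also have "\<bar>ln y\<bar> * (hk a y / Gamma a) = 1 / Gamma a * norm (hk a y * ln y)"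
      using hk_nonneg[of a y] by (simp add: abs_mult)
    also have "ennreal (1 / Gamma a * norm (hk a y * ln y)) = ennreal (1 / Gamma a) * ennreal (norm (hk a y * ln y))"
      by (rule ennreal_mult) (use g in auto)
    finally show "ennreal \<bar>ln (th * y / th)\<bar> * ennreal (hk a y / Gamma a) = ennreal (1 / Gamma a) * ennreal (norm (hk a y * ln y))" .
  qed
  also have "\<dots> = ennreal (1 / Gamma a) * (\<integral>\<^sup>+y. ennreal (norm (hk a y * ln y)) \<partial>lborel)"
    by (rule nn_integral_cmult) measurable
  also have "\<dots> < \<infinity>" using hk_ln_int[OF a] unfolding integrable_iff_bounded
    by (simp add: ennreal_mult_less_top)
  finally show ?thesis .
qed

lemma prod_bound_int:
  assumes a: "a > 0" and th: "th > 0" and th': "th' > 0"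
  shows "integrable (lborel \<Otimes>\<^sub>M lborel) (\<lambda>p. \<bar>ln (fst p / th)\<bar> * gdens a th (fst p) * gdens a th' (snd p))"
proof (rule integrableI_nonneg)
  show "AE p in lborel \<Otimes>\<^sub>M lborel. 0 \<le> \<bar>ln (fst p / th)\<bar> * gdens a th (fst p) * gdens a th' (snd p)"
    using gdens_nonneg[OF a th] gdens_nonneg[OF a th'] by (intro AE_I2) simp
  have "(\<integral>\<^sup>+p. ennreal (\<bar>ln (fst p / th)\<bar> * gdens a th (fst p) * gdens a th' (snd p)) \<partial>(lborel \<Otimes>\<^sub>M lborel))
     = (\<integral>\<^sup>+x. ennreal (\<bar>ln (x / th)\<bar> * gdens a th x) \<partial>lborel) * (\<integral>\<^sup>+y. ennreal (gdens a th' y) \<partial>lborel)"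
    using gdens_nonneg[OF a th] gdens_nonneg[OF a th'] by (subst nn_prod[symmetric]) (auto simp: mult_ac)
  also have "\<dots> < \<infinity>" using lnabs_fin[OF a th] by (simp add: gdens_mass[OF a th'])
  finally show "(\<integral>\<^sup>+p. ennreal (\<bar>ln (fst p / th)\<bar> * gdens a th (fst p) * gdens a th' (snd p)) \<partial>(lborel \<Otimes>\<^sub>M lborel)) < \<infinity>" .
qed measurable

lemma prod_bound_int2:
  assumes a: "a > 0" and th: "th > 0" and th': "th' > 0"
  shows "integrable (lborel \<Otimes>\<^sub>M lborel) (\<lambda>p. \<bar>ln (snd p / th)\<bar> * gdens a th' (fst p) * gdens a th (snd p))"
proof (rule integrableI_nonneg)
  show "AE p in lborel \<Otimes>\<^sub>M lborel. 0 \<le> \<bar>ln (snd p / th)\<bar> * gdens a th' (fst p) * gdens a th (snd p)"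
    using gdens_nonneg[OF a th] gdens_nonneg[OF a th'] by (intro AE_I2) simp
  have "(\<integral>\<^sup>+p. ennreal (\<bar>ln (snd p / th)\<bar> * gdens a th' (fst p) * gdens a th (snd p)) \<partial>(lborel \<Otimes>\<^sub>M lborel))
     = (\<integral>\<^sup>+x. ennreal (gdens a th' x) \<partial>lborel) * (\<integral>\<^sup>+y. ennreal (\<bar>ln (y / th)\<bar> * gdens a th y) \<partial>lborel)"
    using gdens_nonneg[OF a th] gdens_nonneg[OF a th'] by (subst nn_prod[symmetric]) (auto simp: mult_ac)
  also have "\<dots> < \<infinity>" using lnabs_fin[OF a th] by (simp add: gdens_mass[OF a th'])
  finally show "(\<integral>\<^sup>+p. ennreal (\<bar>ln (snd p / th)\<bar> * gdens a th' (fst p) * gdens a th (snd p)) \<partial>(lborel \<Otimes>\<^sub>M lborel)) < \<infinity>" .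
qed measurable

definition Af :: "real \<Rightarrow> real \<Rightarrow> real \<Rightarrow> real \<times> real \<Rightarrow> real" where
  "Af a th1 th2 p = (if snd p / th2 \<le> fst p / th1 then ln (fst p / th1) * gdens a th1 (fst p) * gdens a th2 (snd p) else 0)"
definition Bc :: "real \<Rightarrow> real \<Rightarrow> real \<Rightarrow> real \<Rightarrow> real \<Rightarrow> real" where
  "Bc a th1 th2 x1 x2 = (if x1 / th1 < x2 / th2 then ln (x2 / th2) * gdens a th1 x1 * gdens a th2 x2 else 0)"

lemma Af_int: assumes a: "a > 0" and th1: "th1 > 0" and th2: "th2 > 0"
  shows "integrable (lborel \<Otimes>\<^sub>M lborel) (Af a th1 th2)"
proof (rule Bochner_Integration.integrable_bound[OF prod_bound_int[OF a th1 th2]])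
  show "AE p in lborel \<Otimes>\<^sub>M lborel. norm (Af a th1 th2 p) \<le> norm (\<bar>ln (fst p / th1)\<bar> * gdens a th1 (fst p) * gdens a th2 (snd p))"
    using gdens_nonneg[OF a th1] gdens_nonneg[OF a th2] by (intro AE_I2) (auto simp: Af_def abs_mult)
qed (unfold Af_def, measurable)

lemma Bc_int: assumes a: "a > 0" and th1: "th1 > 0" and th2: "th2 > 0"
  shows "integrable (lborel \<Otimes>\<^sub>M lborel) (\<lambda>(x1, x2). Bc a th1 th2 x1 x2)"
proof (rule Bochner_Integration.integrable_bound[OF prod_bound_int2[OF a th2 th1]])
  show "AE p in lborel \<Otimes>\<^sub>M lborel. norm ((\<lambda>(x1, x2). Bc a th1 th2 x1 x2) p) \<le> norm (\<bar>ln (snd p / th2)\<bar> * gdens a th1 (fst p) * gdens a th2 (snd p))"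
    using gdens_nonneg[OF a th1] gdens_nonneg[OF a th2] by (intro AE_I2) (auto simp: Bc_def abs_mult split: prod.splits)
qed (unfold Bc_def, measurable)

lemma Af_integral: assumes a: "a > 0" and th1: "th1 > 0" and th2: "th2 > 0"
  shows "integral\<^sup>L (lborel \<Otimes>\<^sub>M lborel) (Af a th1 th2) = (\<integral>y. ln y * gdens a 1 y * Fc a y \<partial>lborel)"
proof -
  have "integral\<^sup>L (lborel \<Otimes>\<^sub>M lborel) (Af a th1 th2) = (\<integral>x1. \<integral>x2. Af a th1 th2 (x1, x2) \<partial>lborel \<partial>lborel)"
    by (rule lborel_pair.integral_fst'[symmetric, OF Af_int[OF a th1 th2]])
  also have "\<dots> = (\<integral>x1. ln (x1 / th1) * gdens a th1 x1 * Fc a (x1 / th1) \<partial>lborel)"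
  proof (intro Bochner_Integration.integral_cong refl)
    fix x1 :: real
    have "(\<integral>x2. Af a th1 th2 (x1, x2) \<partial>lborel) = (\<integral>x2. (ln (x1 / th1) * gdens a th1 x1) * (indicator {..th2 * (x1 / th1)} x2 * gdens a th2 x2) \<partial>lborel)"
    proof (intro Bochner_Integration.integral_cong refl)
      fix x2 :: real
      have "(x2 / th2 \<le> x1 / th1) = (x2 \<le> th2 * (x1 / th1))" using th2 by (simp add: field_simps)
      thus "Af a th1 th2 (x1, x2) = (ln (x1 / th1) * gdens a th1 x1) * (indicator {..th2 * (x1 / th1)} x2 * gdens a th2 x2)"
        by (simp add: Af_def indicator_def)
    qed
    also have "\<dots> = (ln (x1 / th1) * gdens a th1 x1) * (\<integral>x2. indicator {..th2 * (x1 / th1)} x2 * gdens a th2 x2 \<partial>lborel)"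
      by (rule integral_mult_right_zero)
    also have "\<dots> = ln (x1 / th1) * gdens a th1 x1 * Fc a (x1 / th1)"
      by (simp only: cdf_scale[OF th2])
    finally show "(\<integral>x2. Af a th1 th2 (x1, x2) \<partial>lborel) = ln (x1 / th1) * gdens a th1 x1 * Fc a (x1 / th1)" .
  qed
  also have "\<dots> = (\<integral>y. ln y * gdens a 1 y * Fc a y \<partial>lborel)" by (rule ln_subst[OF th1])
  finally show ?thesis .
qed

lemma Bc_integral: assumes a: "a > 0" and th1: "th1 > 0" and th2: "th2 > 0"
  shows "integral\<^sup>L (lborel \<Otimes>\<^sub>M lborel) (\<lambda>(x1, x2). Bc a th1 th2 x1 x2) = (\<integral>y. ln y * gdens a 1 y * Fc a y \<partial>lborel)"
proof -
  have "integral\<^sup>L (lborel \<Otimes>\<^sub>M lborel) (\<lambda>(x1, x2). Bc a th1 th2 x1 x2) = (\<integral>x2. \<integral>x1. Bc a th1 th2 x1 x2 \<partial>lborel \<partial>lborel)"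
    by (rule lborel_pair.integral_snd[symmetric, OF Bc_int[OF a th1 th2]])
  also have "\<dots> = (\<integral>x2. ln (x2 / th2) * gdens a th2 x2 * Fc a (x2 / th2) \<partial>lborel)"
  proof (intro Bochner_Integration.integral_cong refl)
    fix x2 :: real
    have "(\<integral>x1. Bc a th1 th2 x1 x2 \<partial>lborel) = (\<integral>x1. (ln (x2 / th2) * gdens a th2 x2) * (indicator {..<th1 * (x2 / th2)} x1 * gdens a th1 x1) \<partial>lborel)"
    proof (intro Bochner_Integration.integral_cong refl)
      fix x1 :: real
      have "(x1 / th1 < x2 / th2) = (x1 < th1 * (x2 / th2))" using th1 by (simp add: field_simps)
      thus "Bc a th1 th2 x1 x2 = (ln (x2 / th2) * gdens a th2 x2) * (indicator {..<th1 * (x2 / th2)} x1 * gdens a th1 x1)"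
        by (simp add: Bc_def indicator_def mult_ac)
    qed
    also have "\<dots> = (ln (x2 / th2) * gdens a th2 x2) * (\<integral>x1. indicator {..<th1 * (x2 / th2)} x1 * gdens a th1 x1 \<partial>lborel)"
      by (rule integral_mult_right_zero)
    also have "\<dots> = ln (x2 / th2) * gdens a th2 x2 * Fc a (x2 / th2)"
      by (simp only: cdf_scale_lt[OF th1])
    finally show "(\<integral>x1. Bc a th1 th2 x1 x2 \<partial>lborel) = ln (x2 / th2) * gdens a th2 x2 * Fc a (x2 / th2)" .
  qed
  also have "\<dots> = (\<integral>y. ln y * gdens a 1 y * Fc a y \<partial>lborel)" by (rule ln_subst[OF th2])
  finally show ?thesis .
qed

lemma c2_eq: assumes a: "a > 0"
  shows "c2 a = 2 * (\<integral>y. ln y * gdens a 1 y * Fc a y \<partial>lborel)"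
proof -
  have "(LINT z:{0<..}|lborel. ln z * gcdf a z * gdens a 1 z) = (\<integral>y. ln y * gdens a 1 y * Fc a y \<partial>lborel)"
    unfolding set_lebesgue_integral_def
  proof (intro Bochner_Integration.integral_cong refl)
    fix z :: real
    show "indicator {0<..} z *\<^sub>R (ln z * gcdf a z * gdens a 1 z) = ln z * gdens a 1 z * Fc a z"
    proof (cases "z > 0")
      case True
      have "(LBINT t=ereal 0..ereal z. gdens a 1 t) = (LBINT t:{0..z}. gdens a 1 t)"
        by (rule interval_integral_Icc) (use True in simp)
      hence "gcdf a z = (LBINT t:{0..z}. gdens a 1 t)"
        unfolding gcdf_def by (simp add: zero_ereal_def)
      also have "\<dots> = Fc a z" unfolding set_lebesgue_integral_def Fc_def
        by (intro Bochner_Integration.integral_cong refl) (auto simp: indicator_def gdens_def)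
      finally show ?thesis using True by (simp add: indicator_def)
    qed (simp add: gdens_def)
  qed
  thus ?thesis unfolding c2_def by simp
qed

definition Mf :: "real \<Rightarrow> real \<Rightarrow> real \<times> real \<Rightarrow> real" where
  "Mf th1 th2 p = ln (max (fst p / th1) (snd p / th2))"

lemma Mw_split: "Mf th1 th2 p * wf a th1 th2 p = Af a th1 th2 p + (\<lambda>(x1, x2). Bc a th1 th2 x1 x2) p"
  by (cases p) (auto simp: Mf_def wf_def Af_def Bc_def max_def)

lemma EL_le_c2: assumes a: "a > 0" and th1: "th1 > 0" and th2: "th2 > 0"
  shows "(\<integral>p. Lf th1 th2 p * wf a th1 th2 p \<partial>(lborel \<Otimes>\<^sub>M lborel)) \<le> c2 a"
proof -
  have iM: "integrable (lborel \<Otimes>\<^sub>M lborel) (\<lambda>p. Af a th1 th2 p + (\<lambda>(x1, x2). Bc a th1 th2 x1 x2) p)"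
    by (intro Bochner_Integration.integrable_add Af_int Bc_int a th1 th2)
  have "(\<integral>p. Lf th1 th2 p * wf a th1 th2 p \<partial>(lborel \<Otimes>\<^sub>M lborel))
      \<le> (\<integral>p. Af a th1 th2 p + (\<lambda>(x1, x2). Bc a th1 th2 x1 x2) p \<partial>(lborel \<Otimes>\<^sub>M lborel))"
  proof (rule integral_mono[OF L_int[OF a th1 th2] iM])
    fix p :: "real \<times> real"
    obtain x1 x2 where p: "p = (x1, x2)" by (cases p)
    show "Lf th1 th2 p * wf a th1 th2 p \<le> Af a th1 th2 p + (\<lambda>(x1, x2). Bc a th1 th2 x1 x2) p"
      unfolding Mw_split[symmetric]
    proof (cases "x1 > 0 \<and> x2 > 0")
      case True
      have "Lf th1 th2 p \<le> Mf th1 th2 p"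
      proof (cases "x2 \<le> x1")
        case le: True
        have "Lf th1 th2 p = ln (x1 / th1)" using le True th1 by (simp add: p Lf_def HS_def max_def ln_div)
        also have "\<dots> \<le> Mf th1 th2 p" unfolding Mf_def p using True th1 th2
          by (subst ln_le_cancel_iff) (auto simp: max_def)
        finally show ?thesis .
      next
        case gt: False
        have "Lf th1 th2 p = ln (x2 / th2)" using gt True th2 by (simp add: p Lf_def HS_def max_def ln_div)
        also have "\<dots> \<le> Mf th1 th2 p" unfolding Mf_def p using True th1 th2
          by (subst ln_le_cancel_iff) (auto simp: max_def)
        finally show ?thesis .
      qed
      thus "Lf th1 th2 p * wf a th1 th2 p \<le> Mf th1 th2 p * wf a th1 th2 p"
        by (intro mult_right_mono wf_nonneg a th1 th2)
    next
      case False
      hence "wf a th1 th2 p = 0" by (auto simp: p wf_def gdens_def)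
      thus "Lf th1 th2 p * wf a th1 th2 p \<le> Mf th1 th2 p * wf a th1 th2 p" by simp
    qed
  qed
  also have "\<dots> = c2 a"
    using Af_int[OF a th1 th2] Bc_int[OF a th1 th2]
    by (simp add: Af_integral[OF a th1 th2] Bc_integral[OF a th1 th2] c2_eq[OF a])
  finally show ?thesis .
qed

lemma risk_c2_le: assumes a: "a > 0" and th1: "th1 > 0" and th2: "th2 > 0" and c: "c \<ge> c2 a"
  shows "risk a th1 th2 (delta (c2 a)) \<le> risk a th1 th2 (delta c)"
proof -
  define E where "E = (\<integral>p. Lf th1 th2 p * wf a th1 th2 p \<partial>(lborel \<Otimes>\<^sub>M lborel))"
  define E2 where "E2 = (\<integral>p. (Lf th1 th2 p)\<^sup>2 * wf a th1 th2 p \<partial>(lborel \<Otimes>\<^sub>M lborel))"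
  have El: "E \<le> c2 a" unfolding E_def by (rule EL_le_c2[OF a th1 th2])
  have "(c - c2 a) * (2 * E) \<le> (c - c2 a) * (c + c2 a)"
    using El c by (intro mult_left_mono) auto
  hence "E2 - 2 * c2 a * E + (c2 a)\<^sup>2 \<le> E2 - 2 * c * E + c\<^sup>2"
    by (simp add: power2_eq_square algebra_simps)
  thus ?thesis unfolding risk_quad[OF a th1 th2] E_def[symmetric] E2_def[symmetric]
    by (rule ennreal_leI)
qed

lemma quad_nonneg: assumes a: "a > 0" and th1: "th1 > 0" and th2: "th2 > 0"
  shows "(\<integral>p. (Lf th1 th2 p)\<^sup>2 * wf a th1 th2 p \<partial>(lborel \<Otimes>\<^sub>M lborel))
      - 2 * t * (\<integral>p. Lf th1 th2 p * wf a th1 th2 p \<partial>(lborel \<Otimes>\<^sub>M lborel)) + t\<^sup>2 \<ge> 0"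
proof -
  have eq: "(\<lambda>p. (Lf th1 th2 p - t)\<^sup>2 * wf a th1 th2 p) = (\<lambda>p. (Lf th1 th2 p)\<^sup>2 * wf a th1 th2 p - (2 * t) * (Lf th1 th2 p * wf a th1 th2 p) + t\<^sup>2 * wf a th1 th2 p)"
    by (auto simp: fun_eq_iff power2_eq_square algebra_simps)
  have "0 \<le> (\<integral>p. (Lf th1 th2 p - t)\<^sup>2 * wf a th1 th2 p \<partial>(lborel \<Otimes>\<^sub>M lborel))"
    using wf_nonneg[OF a th1 th2] by (intro integral_nonneg_AE AE_I2) simp
  also have "(\<integral>p. (Lf th1 th2 p - t)\<^sup>2 * wf a th1 th2 p \<partial>(lborel \<Otimes>\<^sub>M lborel))
     = (\<integral>p. (Lf th1 th2 p)\<^sup>2 * wf a th1 th2 p \<partial>(lborel \<Otimes>\<^sub>M lborel))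
      - 2 * t * (\<integral>p. Lf th1 th2 p * wf a th1 th2 p \<partial>(lborel \<Otimes>\<^sub>M lborel)) + t\<^sup>2"
    unfolding eq using wf_int[OF a th1 th2] L2_int[OF a th1 th2] L_int[OF a th1 th2]
    by (simp add: Bochner_Integration.integral_add Bochner_Integration.integral_diff
        Bochner_Integration.integrable_diff Bochner_Integration.integrable_add)
  finally show ?thesis .
qed

lemma EL11: assumes a: "a > 0"
  shows "(\<integral>p. Lf 1 1 p * wf a 1 1 p \<partial>(lborel \<Otimes>\<^sub>M lborel)) = c2 a"
proof -
  have "(\<integral>p. Lf 1 1 p * wf a 1 1 p \<partial>(lborel \<Otimes>\<^sub>M lborel))
      = (\<integral>p. Af a 1 1 p + (\<lambda>(x1, x2). Bc a 1 1 x1 x2) p \<partial>(lborel \<Otimes>\<^sub>M lborel))"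
  proof (intro Bochner_Integration.integral_cong refl)
    fix p :: "real \<times> real"
    have "Lf 1 1 p = Mf 1 1 p" by (simp add: Lf_def Mf_def HS_def)
    thus "Lf 1 1 p * wf a 1 1 p = Af a 1 1 p + (\<lambda>(x1, x2). Bc a 1 1 x1 x2) p" by (simp add: Mw_split)
  qed
  also have "\<dots> = c2 a"
    using Af_int[OF a, of 1 1] Bc_int[OF a, of 1 1]
    by (simp add: Af_integral[OF a] Bc_integral[OF a] c2_eq[OF a])
  finally show ?thesis .
qed

lemma c2_gt: assumes a: "a > 0" shows "c2 a > Digamma (2 * a) - ln 2"
proof -
  define V where "V = Vb (2 * a)"
  define b where "b r = Digamma (2 * a) - ln (1 + r)" for r :: real
  define h where "h r = indicator {0<..<1} r * (2 * P1 a 1 1 r)" for r :: real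
  define G where "G t r = h r * ((b r - t)\<^sup>2 + V)" for t r :: real
  have P21: "P2 a 1 1 r = P1 a 1 1 r" for r by (simp add: P1_def P2_def add.commute)
  have M1b: "M1 a 1 1 r = b r" and M2b: "M2 a 1 1 r = b r" for r
    by (simp_all add: M1_def M2_def b_def add.commute)
  have h0: "h r \<ge> 0" for r unfolding h_def using P_nonneg[OF a, of 1 1 r] by (simp add: indicator_def)
  have V0: "V \<ge> 0" unfolding V_def using a by (intro Vb_nonneg) simp
  have hm[measurable]: "h \<in> borel_measurable lborel" unfolding h_def P1_def by measurable
  have bm[measurable]: "b \<in> borel_measurable lborel" unfolding b_def by measurable
  have Gm[measurable]: "G t \<in> borel_measurable lborel" for t unfolding G_def by measurable
  have riskG: "risk a 1 1 (delta t) = (\<integral>\<^sup>+r. ennreal (G t r) \<partial>lborel)" for t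
    unfolding risk_delta_rho[OF a zero_less_one zero_less_one]
  proof (intro nn_integral_cong)
    fix r :: real
    show "indicator {0<..<1} r * ennreal (Qr a 1 1 r t) = ennreal (G t r)"
      by (simp add: G_def h_def Qr_def P21 M1b M2b V_def indicator_def algebra_simps)
  qed
  have Gint: "integrable lborel (G t)" for t
  proof (rule integrableI_nonneg)
    show "AE r in lborel. 0 \<le> G t r" using h0 V0 by (intro AE_I2) (simp add: G_def)
    show "(\<integral>\<^sup>+r. ennreal (G t r) \<partial>lborel) < \<infinity>" using risk_delta_fin[OF a zero_less_one zero_less_one, of t]
      by (simp add: riskG)
  qed simp
  have eh: "h = (\<lambda>r. (G 1 r + G (-1) r - 2 * G 0 r) / 2)"
    by (auto simp: fun_eq_iff G_def power2_eq_square algebra_simps)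
  have hint: "integrable lborel h" unfolding eh
    by (intro Bochner_Integration.integrable_divide Bochner_Integration.integrable_add
        Bochner_Integration.integrable_diff Bochner_Integration.integrable_mult_right Gint)
  have ehb: "(\<lambda>r. h r * b r) = (\<lambda>r. (G (-1) r - G 1 r) / 4)"
    by (auto simp: fun_eq_iff G_def power2_eq_square algebra_simps)
  have hbint: "integrable lborel (\<lambda>r. h r * b r)" unfolding ehb
    by (intro Bochner_Integration.integrable_divide Bochner_Integration.integrable_diff Gint)
  have eG: "G t = (\<lambda>r. G 0 r - 2 * t * (h r * b r) + t\<^sup>2 * h r)" for t
    by (auto simp: fun_eq_iff G_def power2_eq_square algebra_simps)
  define A0 where "A0 = integral\<^sup>L lborel (G 0)"
  define B where "B = (\<integral>r. h r * b r \<partial>lborel)"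
  define C where "C = integral\<^sup>L lborel h"
  have IG: "integral\<^sup>L lborel (G t) = A0 - 2 * t * B + t\<^sup>2 * C" for t
    unfolding A0_def B_def C_def eG[of t] using Gint[of 0] hbint hint
    by (simp add: Bochner_Integration.integral_add Bochner_Integration.integral_diff
        Bochner_Integration.integrable_diff Bochner_Integration.integrable_add)
  define E where "E = (\<integral>p. Lf 1 1 p * wf a 1 1 p \<partial>(lborel \<Otimes>\<^sub>M lborel))"
  define E2 where "E2 = (\<integral>p. (Lf 1 1 p)\<^sup>2 * wf a 1 1 p \<partial>(lborel \<Otimes>\<^sub>M lborel))"
  have eqt: "E2 - 2 * t * E + t\<^sup>2 = A0 - 2 * t * B + t\<^sup>2 * C" for t
  proof -
    have "ennreal (E2 - 2 * t * E + t\<^sup>2) = risk a 1 1 (delta t)"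
      unfolding E_def E2_def by (rule risk_quad[OF a zero_less_one zero_less_one, symmetric])
    also have "\<dots> = ennreal (integral\<^sup>L lborel (G t))" unfolding riskG
      by (rule nn_integral_eq_integral[OF Gint]) (use h0 V0 in \<open>auto simp: G_def\<close>)
    finally have "ennreal (E2 - 2 * t * E + t\<^sup>2) = ennreal (integral\<^sup>L lborel (G t))" .
    moreover have "E2 - 2 * t * E + t\<^sup>2 \<ge> 0" unfolding E_def E2_def by (rule quad_nonneg[OF a]) auto
    moreover have "integral\<^sup>L lborel (G t) \<ge> 0" using h0 V0 by (intro integral_nonneg_AE AE_I2) (simp add: G_def)
    ultimately show ?thesis unfolding IG by simp
  qed
  have "E = B" using eqt[of 1] eqt[of "-1"] by simp
  moreover have "C = 1" using eqt[of 1] eqt[of "-1"] eqt[of 0] by simp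
  moreover have "E = c2 a" unfolding E_def by (rule EL11[OF a])
  moreover have "B > Digamma (2 * a) - ln 2 * 1"
  proof -
    define D where "D r = h r * (ln 2 - ln (1 + r))" for r
    have eD: "D = (\<lambda>r. h r * b r - (Digamma (2 * a) - ln 2) * h r)"
      by (auto simp: fun_eq_iff D_def b_def algebra_simps)
    have Dint: "integrable lborel D" unfolding eD
      by (intro Bochner_Integration.integrable_diff Bochner_Integration.integrable_mult_right hint hbint)
    have Dnn: "AE r in lborel. 0 \<le> D r"
    proof (intro AE_I2)
      fix r
      show "0 \<le> D r"
      proof (cases "r \<in> {0<..<1}")
        case True
        hence "ln (1 + r) \<le> ln 2" by (subst ln_le_cancel_iff) auto
        thus ?thesis unfolding D_def using h0[of r] by simp
      qed (simp add: D_def h_def)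
    qed
    have "integral\<^sup>L lborel D \<noteq> 0"
    proof
      assume "integral\<^sup>L lborel D = 0"
      hence "AE r in lborel. D r = 0" using integral_nonneg_eq_0_iff_AE[OF Dint Dnn] by simp
      from AE_interval_ex[OF this, of 0 1] obtain r where r: "r \<in> {0<..<1}" "D r = 0" by auto
      have "ln (1 + r) < ln 2" using r(1) by (subst ln_less_cancel_iff) auto
      moreover have "h r > 0" using r(1) P_pos[OF a zero_less_one zero_less_one, of r] by (simp add: h_def)
      ultimately have "D r > 0" unfolding D_def by simp
      thus False using r(2) by simp
    qed
    moreover have "integral\<^sup>L lborel D \<ge> 0" using Dnn by (rule integral_nonneg_AE)
    ultimately have "integral\<^sup>L lborel D > 0" by simp
    also have "integral\<^sup>L lborel D = B - (Digamma (2 * a) - ln 2) * C"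
      unfolding eD B_def C_def using hint hbint by simp
    finally show ?thesis using \<open>C = 1\<close> by simp
  qed
  ultimately show ?thesis by simp
qed

lemma dom_c2:
  assumes a: "a > 0" and c: "c \<ge> c2 a"
  shows "dominates a (deltaS a (c2 a)) (delta c)"
  unfolding dominates_def
proof (intro conjI allI impI)
  fix th1 th2 :: real assume th1: "th1 > 0" and th2: "th2 > 0"
  have "risk a th1 th2 (deltaS a (c2 a)) \<le> risk a th1 th2 (delta (c2 a))" by (rule deltaS_le[OF a th1 th2])
  also have "\<dots> \<le> risk a th1 th2 (delta c)" by (rule risk_c2_le[OF a th1 th2 c])
  finally show "risk a th1 th2 (deltaS a (c2 a)) \<le> risk a th1 th2 (delta c)" .
next
  have "risk a 1 1 (deltaS a (c2 a)) < risk a 1 1 (delta (c2 a))"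
    by (rule deltaS_lt[OF a zero_less_one zero_less_one c2_gt[OF a]])
  also have "\<dots> \<le> risk a 1 1 (delta c)" by (rule risk_c2_le[OF a zero_less_one zero_less_one c])
  finally show "\<exists>th1>0. \<exists>th2>0. risk a th1 th2 (deltaS a (c2 a)) < risk a th1 th2 (delta c)"
    by (intro exI[of _ "1::real"] conjI) auto
qed

lemma lna_gt: fixes a :: real assumes a: "a > 0" shows "ln a > Digamma (2 * a) - ln 2"
proof -
  have "Digamma (2 * a) < ln (2 * a)" using a by (intro Digamma_less_ln) simp
  also have "ln (2 * a) = ln 2 + ln a" using a by (simp add: ln_mult)
  finally show ?thesis by simp
qed

theorem theorem2p3:
  fixes a :: real
  assumes "a > 0"
  shows "(\<forall>c. (c < c1 a \<or> c > Digamma (2 * a) - ln 2) \<longrightarrow> inadmissible a (delta c))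
    \<and> (\<forall>c. c < c1 a \<longrightarrow> dominates a (delta (c1 a)) (delta c))
    \<and> (\<forall>c. Digamma (2 * a) - ln 2 < c \<and> c < c2 a \<longrightarrow> dominates a (deltaS a c) (delta c))
    \<and> (\<forall>c. c \<ge> c2 a \<longrightarrow> dominates a (deltaS a (c2 a)) (delta c))
    \<and> inadmissible a (delta (ln a)) \<and> dominates a (deltaS a (ln a)) (delta (ln a))
    \<and> inadmissible a (delta (ln (a + 1))) \<and> dominates a (deltaS a (ln (a + 1))) (delta (ln (a + 1)))"
proof -
  note a = assms
  have l1: "dominates a (deltaS a (ln a)) (delta (ln a))" by (rule domA[OF a lna_gt[OF a]])
  have "ln a < ln (a + 1)" using a by simp
  hence l2: "dominates a (deltaS a (ln (a + 1))) (delta (ln (a + 1)))"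
    using lna_gt[OF a] by (intro domA[OF a]) linarith
  show ?thesis
  proof (intro conjI allI impI)
    fix c assume "c < c1 a \<or> c > Digamma (2 * a) - ln 2"
    thus "inadmissible a (delta c)" unfolding inadmissible_def
      using domB[OF a] domA[OF a] by blast
  next
    fix c assume "c < c1 a" thus "dominates a (delta (c1 a)) (delta c)" by (rule domB[OF a])
  next
    fix c assume "Digamma (2 * a) - ln 2 < c \<and> c < c2 a"
    thus "dominates a (deltaS a c) (delta c)" using domA[OF a] by blast
  next
    fix c assume "c \<ge> c2 a" thus "dominates a (deltaS a (c2 a)) (delta c)" by (rule dom_c2[OF a])
  qed (use l1 l2 in \<open>auto simp: inadmissible_def\<close>)
qed

end
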